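(* Fix integers $p\ge 1$, $N_p\ge 1$, a time index $j\in\mathbb{N}$, a gain $K\in\mathbb{R}^{pn_u\times n_x}$, vectors $z_{l|j}\in\mathbb{R}^{n_x}$ and scalars $\alpha_{l|j}\ge 0$ for $l\in\{0,\dots,N_p\}$, vectors $V_{l|j}\in\mathbb{R}^{pn_u}$ for $l\in\{0,\dots,N_p-1\}$, and the current state $X_j\in\mathbb{R}^{n_x}$. Define the tube sets $\mathcal{X}_{l|j}=\{z_{l|j}\}\oplus\alpha_{l|j}\mathcal{X}_0=\{x: H_x(x-z_{l|j})\le \alpha_{l|j}\mathbf{1}\}$ and the policies $U_{l|j}(X)=KX+V_{l|j}$. Then the following tube conditions hold: (i) $X_j\in\mathcal{X}_{0|j}$; (ii) for all $l\in\{0,\dots,N_p-1\}$, all $X\in\mathcal{X}_{l|j}$, all $\theta\in\Theta$ and all $w_x\in\mathbb{W}_x$: $\bar A(\theta)X+\bar B(\theta)U_{l|j}(X)+w_x\in\mathcal{X}_{l+1|j}$; (iii) for all $l\in\{0,\dots,N_p-1\}$ and all $X\in\mathcal{X}_{l|j}$: $X\in\mathbb{X}$ and $U_{l|j}(X)\in\mathbb{U}^p$; (iv) for all $l\in\{0,\dots,N_p-1\}$, all $X\in\mathcal{X}_{l|j}$, all $\theta\in\Theta$ and all $w_y\in\mathbb{W}_y$: $\bar C(\theta)X+\bar D(\theta)U_{l|j}(X)+w_y\in\mathbb{X}^{p-1}$; if and only if there exist matrices $\Lambda^v_{l|j}\in\mathbb{R}_{\ge 0}^{(q_x+c_x(p-1))\times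 q_\theta}$ (entrywise nonnegative) such that for all $v\in\{1,\dots,n_v\}$ and all $l\in\{0,\dots,N_p-1\}$: $F z_{l|j}+\alpha_{l|j}\bar f\le\mathbf{1}$, $G_pK z_{l|j}+G_pV_{l|j}+\alpha_{l|j}\bar g\le \mathbf{1}$, $H_x(X_j-z_{0|j})\le \alpha_{0|j}\mathbf{1}$, $\Lambda^v_{l|j}h_\theta+H_p e^v_{l|j}\le \Phi_{l+1|j}-\bar w$, $H_pE^v_{l|j}=\Lambda^v_{l|j}H_\theta$.
   Context: Setting: $n_x,n_u,n_p\in\mathbb{N}$, $p\in\mathbb{N}$, $p\ge1$. Constraint sets $\mathbb{X}=\{x\in\mathbb{R}^{n_x}: Fx\le\mathbf{1}\}$ and $\mathbb{U}=\{u\in\mathbb{R}^{n_u}: Gu\le \mathbf{1}\}$ are compact polytopes with $F\in\mathbb{R}^{c_x\times n_x}$, $G\in\mathbb{R}^{c_u\times n_u}$; $\mathbb{U}^p$ and $\mathbb{X}^{p-1}$ denote Cartesian products, and $\mathbf{1}$ is a vector of ones of appropriate size. Matrices $\bar A(\theta)\in\mathbb{R}^{n_x\times n_x}$, $\bar B(\theta)\in\mathbb{R}^{n_x\times pn_u}$, $\bar C(\theta)\in\mathbb{R}^{(p-1)n_x\times n_x}$, $\bar D(\theta)\in\mathbb{R}^{(p-1)n_x\times pn_u}$ depend affinely on $\theta\in\mathbb{R}^{n_p}$: $(\bar A,\bar B,\bar C,\bar D)(\theta)=(\bar A_0,\bar B_0,\bar C_0,\bar D_0)+\sum_{i=1}^{n_p}(\bar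 A_i,\bar B_i,\bar C_i,\bar D_i)[\theta]_i$. The parameter set $\Theta=\{\theta\in\mathbb{R}^{n_p}: H_\theta\theta\le h_\theta\}$ is a nonempty bounded polytope, $H_\theta\in\mathbb{R}^{q_\theta\times n_p}$, $h_\theta\in\mathbb{R}^{q_\theta}$. $\mathbb{W}_x\subseteq\mathbb{R}^{n_x}$ and $\mathbb{W}_y\subseteq\mathbb{R}^{(p-1)n_x}$ are bounded polytopes. $\mathcal{X}_0=\{x\in\mathbb{R}^{n_x}:H_xx\le\mathbf{1}\}$, $H_x\in\mathbb{R}^{q_x\times n_x}$, is a bounded polytope with vertices $x^1,\dots,x^{n_v}$. Notation: $F_p=\mathrm{blkdiag}(F,\dots,F)$ ($p-1$ blocks), $G_p=\mathrm{blkdiag}(G,\dots,G)$ ($p$ blocks), $H_p=\mathrm{blkdiag}(H_x,F_p)$; $[\bar f]_i=\max_{x\in\mathcal{X}_0}[F]_ix$, $[\bar g]_i=\max_{x\in\mathcal{X}_0}[G_pK]_ix$, $[\bar w_x]_i=\max_{w\in\mathbb{W}_x}[H_x]_iw$, $[\bar w_y]_i=\max_{w\in\mathbb{W}_y}[F_p]_iw$ (where $[M]_i$ is the $i$-th row), $\bar w=[\bar w_x^\top,\bar w_y^\top]^\top$, $\Phi_{l+1|j}=[\alpha_{l+1|j}\mathbf{1}^\top,\mathbf{1}^\top]^\top\in\mathbb{R}^{q_x+c_x(p-1)}$. For each vertex: $X^v_{l|j}=z_{l|j}+\alpha_{l|j}x^v$, $U^v_{l|j}=V_{l|j}+KX^v_{l|j}$,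 $E^v_{l|j}$ is the matrix whose $i$-th column ($i=1,\dots,n_p$) is $\begin{bmatrix}\bar A_iX^v_{l|j}+\bar B_iU^v_{l|j}\\ \bar C_iX^v_{l|j}+\bar D_iU^v_{l|j}\end{bmatrix}$, and $e^v_{l|j}=\begin{bmatrix}\bar A_0X^v_{l|j}+\bar B_0U^v_{l|j}-z_{l+1|j}\\ \bar C_0X^v_{l|j}+\bar D_0U^v_{l|j}\end{bmatrix}$. *)

theory Defs
  imports "Jordan_Normal_Form.Matrix"
begin

(* Vectors/matrices are Jordan_Normal_Form vec/mat; vector inequality \<le> is the
   library's componentwise order (which also requires equal dimensions). *)

definition bounded_vset :: "real vec set \<Rightarrow> bool" where
  "bounded_vset S \<longleftrightarrow> (\<exists>M. \<forall>x\<in>S. \<forall>i<dim_vec x. \<bar>x $ i\<bar> \<le> M)"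

definition is_polytope :: "nat \<Rightarrow> real vec set \<Rightarrow> bool" where
  "is_polytope n S \<longleftrightarrow> (\<exists>m A b. A \<in> carrier_mat m n \<and> b \<in> carrier_vec m \<and>
      S = {w \<in> carrier_vec n. A *\<^sub>v w \<le> b})"

definition extreme_point :: "real vec set \<Rightarrow> real vec \<Rightarrow> bool" where
  "extreme_point S x \<longleftrightarrow> x \<in> S \<and>
     \<not> (\<exists>y\<in>S. \<exists>z\<in>S. \<exists>t::real. y \<noteq> z \<and> 0 < t \<and> t < 1 \<and> x = t \<cdot>\<^sub>v y + (1 - t) \<cdot>\<^sub>v z)"

(* affine parameter dependence: M 0 + sum_{i=1..np} [theta]_i M i
   (theta is 0-indexed, so [theta]_i is theta $ (i - 1)) *)
definition aff_mat :: "nat \<Rightarrow> (nat \<Rightarrow> real mat) \<Rightarrow> real vec \<Rightarrow> real mat" where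
  "aff_mat np M \<theta> = mat (dim_row (M 0)) (dim_col (M 0))
     (\<lambda>(r, c). M 0 $$ (r, c) + (\<Sum>i=1..np. \<theta> $ (i - 1) * M i $$ (r, c)))"

definition ones_vec :: "nat \<Rightarrow> real vec" where
  "ones_vec n = vec n (\<lambda>_. 1)"

definition row_max :: "real mat \<Rightarrow> real vec set \<Rightarrow> real vec" where
  "row_max M S = vec (dim_row M) (\<lambda>i. Sup ((\<lambda>x. row M i \<bullet> x) ` S))"

end

theory Submission
  imports Defs
begin


lemma farkas_bartl:
  fixes a :: "nat \<Rightarrow> real vec" and b :: "real vec"
  assumes "\<forall>i<m. a i \<in> carrier_vec n" "b \<in> carrier_vec n"
    "\<forall>x\<in>carrier_vec n. (\<forall>i<m. a i \<bullet> x \<le> 0) \<longrightarrow> b \<bullet> x \<le> 0"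
  shows "\<exists>lam. (\<forall>i<m. lam i \<ge> 0) \<and> (\<forall>k<n. b $ k = (\<Sum>i<m. lam i * a i $ k))"
  using assms
proof (induction m arbitrary: a b)
  case 0
  have "b \<bullet> b \<le> 0" using 0 by auto
  moreover have "b \<bullet> b = (\<Sum>k<n. (b $ k)^2)" using 0 unfolding scalar_prod_def
    by (auto simp: power2_eq_square lessThan_atLeast0)
  ultimately have "(\<Sum>k<n. (b $ k)^2) = 0"
    by (metis (no_types, lifting) order_antisym_conv sum_nonneg zero_le_power2)
  hence "\<forall>k<n. (b $ k)^2 = 0" by (subst (asm) sum_nonneg_eq_0_iff) auto
  thus ?case by auto
next
  case (Suc m)
  note am = Suc.prems(1) and bc = Suc.prems(2) and hyp = Suc.prems(3)
  show ?case
  proof (cases "\<forall>x\<in>carrier_vec n. (\<forall>i<m. a i \<bullet> x \<le> 0) \<longrightarrow> b \<bullet> x \<le> 0")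
    case True
    from Suc.IH[OF _ bc True] am obtain lam where
      l: "\<forall>i<m. lam i \<ge> 0" "\<forall>k<n. b $ k = (\<Sum>i<m. lam i * a i $ k)" by auto
    show ?thesis
      by (rule exI[of _ "lam(m := 0)"]) (use l in auto)
  next
    case False
    then obtain x0 where x0: "x0 \<in> carrier_vec n" "\<forall>i<m. a i \<bullet> x0 \<le> 0" "b \<bullet> x0 > 0"
      by auto
    have am0: "a m \<bullet> x0 > 0"
    proof (rule ccontr)
      assume "\<not> ?thesis"
      hence "\<forall>i<Suc m. a i \<bullet> x0 \<le> 0" using x0 by (auto simp: less_Suc_eq)
      thus False using hyp x0 by auto
    qed
    define c where "c = (\<lambda>y. (y \<bullet> x0) / (a m \<bullet> x0))"
    define a' where "a' = (\<lambda>i. a i - c (a i) \<cdot>\<^sub>v a m)"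
    define b' where "b' = b - c b \<cdot>\<^sub>v a m"
    have amc: "a m \<in> carrier_vec n" using am by auto
    have a'c: "\<forall>i<m. a' i \<in> carrier_vec n" using am amc unfolding a'_def by auto
    have b'c: "b' \<in> carrier_vec n" using bc amc unfolding b'_def by auto
    have "\<forall>x\<in>carrier_vec n. (\<forall>i<m. a' i \<bullet> x \<le> 0) \<longrightarrow> b' \<bullet> x \<le> 0"
    proof (intro ballI impI)
      fix x assume xc: "x \<in> carrier_vec n" and ax: "\<forall>i<m. a' i \<bullet> x \<le> 0"
      define y where "y = x - ((a m \<bullet> x) / (a m \<bullet> x0)) \<cdot>\<^sub>v x0"
      have yc: "y \<in> carrier_vec n" using xc x0 unfolding y_def by auto
      have key: "\<And>u :: real vec. u \<in> carrier_vec n \<Longrightarrow> u \<bullet> y = (u - c u \<cdot>\<^sub>v a m) \<bullet> x"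
      proof -
        fix u :: "real vec" assume uc: "u \<in> carrier_vec n"
        have "u \<bullet> y = u \<bullet> x - ((a m \<bullet> x) / (a m \<bullet> x0)) * (u \<bullet> x0)"
          unfolding y_def using uc xc x0
          by (simp add: scalar_prod_minus_distrib)
        also have "\<dots> = u \<bullet> x - c u * (a m \<bullet> x)" unfolding c_def by simp
        also have "\<dots> = (u - c u \<cdot>\<^sub>v a m) \<bullet> x"
          using uc xc amc by (simp add: minus_scalar_prod_distrib)
        finally show "u \<bullet> y = (u - c u \<cdot>\<^sub>v a m) \<bullet> x" .
      qed
      have "\<forall>i<Suc m. a i \<bullet> y \<le> 0"
      proof (intro allI impI)
        fix i assume "i < Suc m"
        show "a i \<bullet> y \<le> 0"
        proof (cases "i < m")
          case True thus ?thesis using key[of "a i"] am ax unfolding a'_def by auto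
        next
          case False
          hence "i = m" using \<open>i < Suc m\<close> by auto
          have "a m \<bullet> y = 0" using key[OF amc] am0 unfolding c_def
            using amc xc by (simp add: minus_scalar_prod_distrib)
          thus ?thesis using \<open>i = m\<close> by simp
        qed
      qed
      hence "b \<bullet> y \<le> 0" using hyp yc by auto
      thus "b' \<bullet> x \<le> 0" using key[OF bc] unfolding b'_def by simp
    qed
    from Suc.IH[OF a'c b'c this] obtain mu where
      muh: "\<forall>i<m. mu i \<ge> 0" "\<forall>k<n. b' $ k = (\<Sum>i<m. mu i * a' i $ k)" by auto
    define lm where "lm = (b \<bullet> x0 - (\<Sum>i<m. mu i * (a i \<bullet> x0))) / (a m \<bullet> x0)"
    have lm0: "lm \<ge> 0"
    proof -
      have "(\<Sum>i<m. mu i * (a i \<bullet> x0)) \<le> 0"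
        by (rule sum_nonpos) (use muh x0 in \<open>auto simp: mult_nonneg_nonpos\<close>)
      thus ?thesis unfolding lm_def using x0 am0 by auto
    qed
    show ?thesis
    proof (rule exI[of _ "mu(m := lm)"], intro conjI allI impI)
      fix i assume "i < Suc m" thus "0 \<le> (mu(m := lm)) i" using muh lm0 by auto
    next
      fix k assume k: "k < n"
      have "b $ k = b' $ k + c b * a m $ k" unfolding b'_def using k bc amc by auto
      also have "b' $ k = (\<Sum>i<m. mu i * a i $ k) - (\<Sum>i<m. mu i * c (a i)) * a m $ k"
        using muh(2) k am amc unfolding a'_def
        by (auto simp: sum_subtractf sum_distrib_right right_diff_distrib mult.assoc)
      also have "c b = (b \<bullet> x0) / (a m \<bullet> x0)" unfolding c_def ..
      finally have "b $ k = (\<Sum>i<m. mu i * a i $ k) + lm * a m $ k"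
        unfolding lm_def c_def using am0
        by (simp add: field_simps sum_divide_distrib sum_distrib_left)
      thus "b $ k = (\<Sum>i<Suc m. (mu(m := lm)) i * a i $ k)"
        by simp
    qed
  qed
qed



lemma sp_sum: "w \<in> carrier_vec n \<Longrightarrow> v \<bullet> w = (\<Sum>k<n. v $ k * w $ k)"
  unfolding scalar_prod_def by (auto simp: lessThan_atLeast0)

lemma mv_idx: "A \<in> carrier_mat m n \<Longrightarrow> w \<in> carrier_vec n \<Longrightarrow> i < m \<Longrightarrow>
   (A *\<^sub>v w) $ i = (\<Sum>k<n. A $$ (i,k) * w $ k)"
  by (auto simp: sp_sum intro!: sum.cong)

lemma farkas_affine:
  fixes H :: "real mat" and h g :: "real vec" and \<beta> :: real
  assumes Hc: "H \<in> carrier_mat q n" and hc: "h \<in> carrier_vec q" and gc: "g \<in> carrier_vec n"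
    and feas: "\<exists>\<theta>0\<in>carrier_vec n. H *\<^sub>v \<theta>0 \<le> h"
    and imp: "\<forall>\<theta>\<in>carrier_vec n. H *\<^sub>v \<theta> \<le> h \<longrightarrow> g \<bullet> \<theta> \<le> \<beta>"
  shows "\<exists>lam. (\<forall>i<q. lam i \<ge> 0) \<and> (\<forall>k<n. g $ k = (\<Sum>i<q. lam i * H $$ (i,k)))
            \<and> (\<Sum>i<q. lam i * h $ i) \<le> \<beta>"
proof -
  define a where "a = (\<lambda>i. vec (Suc n) (\<lambda>k. if i < q then (if k < n then H $$ (i,k) else - h $ i)
                                      else (if k < n then 0 else -1)))"
  define b where "b = vec (Suc n) (\<lambda>k. if k < n then g $ k else - \<beta>)"
  have ac: "\<forall>i<Suc q. a i \<in> carrier_vec (Suc n)" unfolding a_def by auto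
  have bc: "b \<in> carrier_vec (Suc n)" unfolding b_def by auto
  have spS: "\<And>v w. w \<in> carrier_vec (Suc n) \<Longrightarrow> v \<bullet> w = (\<Sum>k<n. v $ k * w $ k) + v $ n * w $ n"
    by (simp add: sp_sum)
  have hyp: "\<forall>x\<in>carrier_vec (Suc n). (\<forall>i<Suc q. a i \<bullet> x \<le> 0) \<longrightarrow> b \<bullet> x \<le> 0"
  proof (intro ballI impI)
    fix x :: "real vec" assume xc: "x \<in> carrier_vec (Suc n)" and ax: "\<forall>i<Suc q. a i \<bullet> x \<le> 0"
    define \<theta> where "\<theta> = vec n (\<lambda>k. x $ k)"
    define t where "t = x $ n"
    have \<theta>c: "\<theta> \<in> carrier_vec n" unfolding \<theta>_def by auto
    have Hth: "\<And>i. i < q \<Longrightarrow> (H *\<^sub>v \<theta>) $ i = (\<Sum>k<n. H $$ (i,k) * x $ k)"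
      using mv_idx[OF Hc \<theta>c] by (simp add: \<theta>_def)
    have ai: "\<And>i. i < q \<Longrightarrow> a i \<bullet> x = (H *\<^sub>v \<theta>) $ i - h $ i * t"
      using xc by (simp add: spS Hth a_def t_def)
    have aq: "a q \<bullet> x = - t" using xc by (simp add: spS a_def t_def)
    have t0: "t \<ge> 0" using ax aq by (metis lessI neg_le_0_iff_le)
    have gth: "g \<bullet> \<theta> = (\<Sum>k<n. g $ k * x $ k)" using \<theta>c by (simp add: sp_sum \<theta>_def)
    have bx: "b \<bullet> x = g \<bullet> \<theta> - \<beta> * t" using xc by (simp add: spS b_def gth t_def)
    have Hle: "\<And>i. i < q \<Longrightarrow> (H *\<^sub>v \<theta>) $ i \<le> h $ i * t"
    proof -
      fix i assume i: "i < q"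
      have "a i \<bullet> x \<le> 0" using ax i by auto
      thus "(H *\<^sub>v \<theta>) $ i \<le> h $ i * t" using ai[OF i] by simp
    qed
    show "b \<bullet> x \<le> 0"
    proof (cases "t > 0")
      case True
      define \<theta>' where "\<theta>' = (1 / t) \<cdot>\<^sub>v \<theta>"
      have \<theta>'c: "\<theta>' \<in> carrier_vec n" using \<theta>c unfolding \<theta>'_def by auto
      have "H *\<^sub>v \<theta>' \<le> h"
        unfolding less_eq_vec_def
      proof (intro conjI allI impI)
        show "dim_vec (H *\<^sub>v \<theta>') = dim_vec h" using Hc hc by auto
        fix i assume "i < dim_vec h"
        hence i: "i < q" using hc by auto
        have "(H *\<^sub>v \<theta>') $ i = (1/t) * (H *\<^sub>v \<theta>) $ i"
          unfolding \<theta>'_def using Hc \<theta>c i by (simp add: mult_mat_vec)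
        also have "\<dots> \<le> (1/t) * (h $ i * t)" using Hle[OF i] True
          by (intro mult_left_mono) auto
        also have "\<dots> = h $ i" using True by simp
        finally show "(H *\<^sub>v \<theta>') $ i \<le> h $ i" .
      qed
      hence "g \<bullet> \<theta>' \<le> \<beta>" using imp \<theta>'c by auto
      moreover have "g \<bullet> \<theta>' = (1/t) * (g \<bullet> \<theta>)" unfolding \<theta>'_def using gc \<theta>c by simp
      ultimately have "g \<bullet> \<theta> \<le> \<beta> * t" using True by (simp add: field_simps)
      thus ?thesis using bx by simp
    next
      case False
      hence t: "t = 0" using t0 by simp
      have Hle0: "\<And>i. i < q \<Longrightarrow> (H *\<^sub>v \<theta>) $ i \<le> 0" using Hle t by simp
      from feas obtain \<theta>0 where \<theta>0: "\<theta>0 \<in> carrier_vec n" "H *\<^sub>v \<theta>0 \<le> h" by auto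
      have g0: "g \<bullet> \<theta>0 \<le> \<beta>" using imp \<theta>0 by auto
      have "g \<bullet> \<theta> \<le> 0"
      proof (rule ccontr)
        assume "\<not> ?thesis"
        hence gp: "g \<bullet> \<theta> > 0" by simp
        define s where "s = (\<beta> - g \<bullet> \<theta>0) / (g \<bullet> \<theta>) + 1"
        have s0: "s \<ge> 0" unfolding s_def using g0 gp by auto
        define \<theta>1 where "\<theta>1 = \<theta>0 + s \<cdot>\<^sub>v \<theta>"
        have \<theta>1c: "\<theta>1 \<in> carrier_vec n" unfolding \<theta>1_def using \<theta>0 \<theta>c by auto
        have "H *\<^sub>v \<theta>1 \<le> h"
          unfolding less_eq_vec_def
        proof (intro conjI allI impI)
          show "dim_vec (H *\<^sub>v \<theta>1) = dim_vec h" using Hc hc by auto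
          fix i assume "i < dim_vec h"
          hence i: "i < q" using hc by auto
          have "(H *\<^sub>v \<theta>1) $ i = (H *\<^sub>v \<theta>0) $ i + s * (H *\<^sub>v \<theta>) $ i"
            unfolding \<theta>1_def using Hc \<theta>c \<theta>0 i
            by (simp add: mult_add_distrib_mat_vec[of H q n] mult_mat_vec)
          also have "\<dots> \<le> (H *\<^sub>v \<theta>0) $ i" using Hle0[OF i] s0
            by (simp add: mult_nonneg_nonpos)
          also have "\<dots> \<le> h $ i" using \<theta>0(2) i hc unfolding less_eq_vec_def by auto
          finally show "(H *\<^sub>v \<theta>1) $ i \<le> h $ i" .
        qed
        hence "g \<bullet> \<theta>1 \<le> \<beta>" using imp \<theta>1c by auto
        moreover have "g \<bullet> \<theta>1 = g \<bullet> \<theta>0 + s * (g \<bullet> \<theta>)"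
          unfolding \<theta>1_def using gc \<theta>0 \<theta>c by (simp add: scalar_prod_add_distrib[of g n])
        moreover have "s * (g \<bullet> \<theta>) = \<beta> - g \<bullet> \<theta>0 + g \<bullet> \<theta>"
          unfolding s_def using gp by (simp add: field_simps)
        ultimately show False using gp by simp
      qed
      thus ?thesis using bx t by simp
    qed
  qed
  from farkas_bartl[OF ac bc hyp] obtain lam where
    l: "\<forall>i<Suc q. lam i \<ge> 0" "\<forall>k<Suc n. b $ k = (\<Sum>i<Suc q. lam i * a i $ k)" by blast
  show ?thesis
  proof (rule exI[of _ lam], intro conjI allI impI)
    fix i assume "i < q" thus "lam i \<ge> 0" using l by auto
  next
    fix k assume k: "k < n"
    have "b $ k = (\<Sum>i<Suc q. lam i * a i $ k)" using l k by auto
    thus "g $ k = (\<Sum>i<q. lam i * H $$ (i,k))" using k by (simp add: a_def b_def)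
  next
    have "b $ n = (\<Sum>i<Suc q. lam i * a i $ n)" using l by auto
    hence "- \<beta> = (\<Sum>i<q. lam i * (- h $ i)) + lam q * (-1)"
      by (simp add: a_def b_def)
    hence "(\<Sum>i<q. lam i * h $ i) = \<beta> - lam q" by (simp add: sum_negf)
    thus "(\<Sum>i<q. lam i * h $ i) \<le> \<beta>" using l by auto
  qed
qed



lemma mv_lin_idx:
  fixes A :: "real mat"
  assumes "A \<in> carrier_mat m n" "x \<in> carrier_vec n" "d \<in> carrier_vec n" "i < m"
  shows "(A *\<^sub>v (x + s \<cdot>\<^sub>v d)) $ i = (A *\<^sub>v x) $ i + s * (A *\<^sub>v d) $ i"
proof -
  have "A *\<^sub>v (x + s \<cdot>\<^sub>v d) = A *\<^sub>v x + s \<cdot>\<^sub>v (A *\<^sub>v d)"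
    using assms by (simp add: mult_add_distrib_mat_vec[of A m n] mult_mat_vec[OF assms(1) assms(3)])
  thus ?thesis using assms by simp
qed

lemma push_lemma:
  fixes Hx :: "real mat"
  assumes Hc: "Hx \<in> carrier_mat qx nx"
    and bdd: "bounded_vset {x \<in> carrier_vec nx. Hx *\<^sub>v x \<le> ones_vec qx}"
    and x: "x \<in> carrier_vec nx" "Hx *\<^sub>v x \<le> ones_vec qx"
    and dc: "d \<in> carrier_vec nx" and dnz: "d \<noteq> 0\<^sub>v nx"
    and dT: "\<forall>i<qx. (Hx *\<^sub>v x) $ i = 1 \<longrightarrow> (Hx *\<^sub>v d) $ i = 0"
  shows "\<exists>s>0. Hx *\<^sub>v (x + s \<cdot>\<^sub>v d) \<le> ones_vec qx \<and>
           {i. i < qx \<and> (Hx *\<^sub>v x) $ i = 1} \<subset> {i. i < qx \<and> (Hx *\<^sub>v (x + s \<cdot>\<^sub>v d)) $ i = 1}"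
proof -
  have xle: "\<And>i. i < qx \<Longrightarrow> (Hx *\<^sub>v x) $ i \<le> 1"
    using x(2) unfolding less_eq_vec_def ones_vec_def by auto
  have lin: "\<And>i s. i < qx \<Longrightarrow> (Hx *\<^sub>v (x + s \<cdot>\<^sub>v d)) $ i = (Hx *\<^sub>v x) $ i + s * (Hx *\<^sub>v d) $ i"
    using mv_lin_idx[OF Hc x(1) dc] by auto
  have inX: "Hx *\<^sub>v (x + s \<cdot>\<^sub>v d) \<le> ones_vec qx" if "\<And>i. i < qx \<Longrightarrow> (Hx *\<^sub>v x) $ i + s * (Hx *\<^sub>v d) $ i \<le> 1" for s
    unfolding less_eq_vec_def ones_vec_def using Hc x dc that lin by auto
  define P where "P = {i. i < qx \<and> (Hx *\<^sub>v d) $ i > 0}"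
  have finP: "finite P" unfolding P_def by auto
  have Pne: "P \<noteq> {}"
  proof
    assume P0: "P = {}"
    from bdd obtain M where M: "\<forall>y\<in>{x \<in> carrier_vec nx. Hx *\<^sub>v x \<le> ones_vec qx}. \<forall>i<dim_vec y. \<bar>y $ i\<bar> \<le> M"
      unfolding bounded_vset_def by auto
    from dnz dc obtain k where k: "k < nx" "d $ k \<noteq> 0"
      by (metis carrier_vecD eq_vecI index_zero_vec(1) index_zero_vec(2))
    define s where "s = (M + \<bar>x $ k\<bar> + 1) / \<bar>d $ k\<bar>"
    have M0: "M \<ge> 0" using M x k by (metis (no_types, lifting) abs_ge_zero carrier_vecD mem_Collect_eq order_trans)
    have s0: "s \<ge> 0" unfolding s_def using M0 by auto
    have "Hx *\<^sub>v (x + s \<cdot>\<^sub>v d) \<le> ones_vec qx"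
    proof (rule inX)
      fix i assume i: "i < qx"
      have "i \<notin> P" using P0 by auto
      hence "(Hx *\<^sub>v d) $ i \<le> 0" using i unfolding P_def by auto
      hence "s * (Hx *\<^sub>v d) $ i \<le> 0" using s0 by (simp add: mult_nonneg_nonpos)
      thus "(Hx *\<^sub>v x) $ i + s * (Hx *\<^sub>v d) $ i \<le> 1" using xle[OF i] by linarith
    qed
    moreover have "x + s \<cdot>\<^sub>v d \<in> carrier_vec nx" using x dc by auto
    ultimately have "\<bar>(x + s \<cdot>\<^sub>v d) $ k\<bar> \<le> M" using M k
      by (metis (no_types, lifting) carrier_vecD mem_Collect_eq)
    moreover have "(x + s \<cdot>\<^sub>v d) $ k = x $ k + s * d $ k" using x dc k by auto
    moreover have "\<bar>s * d $ k\<bar> = M + \<bar>x $ k\<bar> + 1" unfolding s_def using k M0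
      by (simp add: abs_mult)
    ultimately show False by linarith
  qed
  define r where "r = (\<lambda>i. (1 - (Hx *\<^sub>v x) $ i) / (Hx *\<^sub>v d) $ i)"
  define s where "s = Min (r ` P)"
  obtain i0 where i0: "i0 \<in> P" "s = r i0" unfolding s_def using finP Pne
    by (metis (no_types, lifting) Min_in finite_imageI image_iff image_is_empty)
  have sle: "\<And>i. i \<in> P \<Longrightarrow> s \<le> r i" unfolding s_def using finP by auto
  have PnT: "\<And>i. i \<in> P \<Longrightarrow> (Hx *\<^sub>v x) $ i < 1"
    using dT xle unfolding P_def by (metis less_eq_real_def less_irrefl mem_Collect_eq)
  have rpos: "\<And>i. i \<in> P \<Longrightarrow> r i > 0" unfolding r_def using PnT unfolding P_def by auto
  have spos: "s > 0" using i0 rpos by auto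
  show ?thesis
  proof (rule exI[of _ s], intro conjI)
    show "s > 0" by fact
    show "Hx *\<^sub>v (x + s \<cdot>\<^sub>v d) \<le> ones_vec qx"
    proof (rule inX)
      fix i assume i: "i < qx"
      show "(Hx *\<^sub>v x) $ i + s * (Hx *\<^sub>v d) $ i \<le> 1"
      proof (cases "i \<in> P")
        case True
        hence dp: "(Hx *\<^sub>v d) $ i > 0" unfolding P_def by auto
        have "s * (Hx *\<^sub>v d) $ i \<le> r i * (Hx *\<^sub>v d) $ i" using sle[OF True] dp
          by (intro mult_right_mono) auto
        also have "\<dots> = 1 - (Hx *\<^sub>v x) $ i" unfolding r_def using dp by simp
        finally show ?thesis by simp
      next
        case False
        hence "(Hx *\<^sub>v d) $ i \<le> 0" using i unfolding P_def by auto
        hence "s * (Hx *\<^sub>v d) $ i \<le> 0" using spos by (simp add: mult_nonneg_nonpos)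
        thus ?thesis using xle[OF i] by linarith
      qed
    qed
    have sub: "{i. i < qx \<and> (Hx *\<^sub>v x) $ i = 1} \<subseteq> {i. i < qx \<and> (Hx *\<^sub>v (x + s \<cdot>\<^sub>v d)) $ i = 1}"
      using dT lin by auto
    have "i0 \<in> {i. i < qx \<and> (Hx *\<^sub>v (x + s \<cdot>\<^sub>v d)) $ i = 1}"
    proof -
      have i0q: "i0 < qx" and dp: "(Hx *\<^sub>v d) $ i0 > 0" using i0 unfolding P_def by auto
      have "(Hx *\<^sub>v (x + s \<cdot>\<^sub>v d)) $ i0 = (Hx *\<^sub>v x) $ i0 + r i0 * (Hx *\<^sub>v d) $ i0"
        using lin[OF i0q] i0 by simp
      also have "\<dots> = 1" unfolding r_def using dp by simp
      finally show ?thesis using i0q by simp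
    qed
    moreover have "i0 \<notin> {i. i < qx \<and> (Hx *\<^sub>v x) $ i = 1}" using PnT[OF i0(1)] by auto
    ultimately show "{i. i < qx \<and> (Hx *\<^sub>v x) $ i = 1} \<subset> {i. i < qx \<and> (Hx *\<^sub>v (x + s \<cdot>\<^sub>v d)) $ i = 1}"
      using sub by blast
  qed
qed



definition raff :: "nat \<Rightarrow> (real vec \<Rightarrow> real) \<Rightarrow> bool" where
  "raff n f \<longleftrightarrow> (\<forall>y\<in>carrier_vec n. \<forall>w\<in>carrier_vec n. \<forall>t.
      f (t \<cdot>\<^sub>v y + (1 - t) \<cdot>\<^sub>v w) = t * f y + (1 - t) * f w)"

lemma vertex_reduction:
  fixes Hx :: "real mat" and f :: "real vec \<Rightarrow> real"
  assumes Hc: "Hx \<in> carrier_mat qx nx"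
    and bdd: "bounded_vset {x \<in> carrier_vec nx. Hx *\<^sub>v x \<le> ones_vec qx}"
    and f: "raff nx f"
    and fv: "\<And>v. extreme_point {x \<in> carrier_vec nx. Hx *\<^sub>v x \<le> ones_vec qx} v \<Longrightarrow> f v \<le> b"
    and x: "x \<in> carrier_vec nx" "Hx *\<^sub>v x \<le> ones_vec qx"
  shows "f x \<le> b"
proof -
  let ?X0 = "{x \<in> carrier_vec nx. Hx *\<^sub>v x \<le> ones_vec qx}"
  define T where "T = (\<lambda>x. {i. i < qx \<and> (Hx *\<^sub>v x) $ i = 1})"
  have cardT: "card (T x) \<le> qx" for x unfolding T_def
    by (metis (no_types, lifting) card_mono finite_lessThan lessThan_iff mem_Collect_eq subsetI card_lessThan)
  have main: "\<forall>x. x \<in> ?X0 \<longrightarrow> qx - card (T x) = n \<longrightarrow> f x \<le> b" for n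
  proof (induction n rule: less_induct)
    case (less n)
    show ?case
    proof (intro allI impI)
      fix x assume xX: "x \<in> ?X0" and nx: "qx - card (T x) = n"
      show "f x \<le> b"
      proof (cases "extreme_point ?X0 x")
        case True thus ?thesis using fv by auto
      next
        case False
        then obtain y w t where yw: "y \<in> ?X0" "w \<in> ?X0" "y \<noteq> w" "0 < t" "t < 1"
          and xe: "x = t \<cdot>\<^sub>v y + (1 - t) \<cdot>\<^sub>v w"
          using xX unfolding extreme_point_def by blast
        have yc: "y \<in> carrier_vec nx" and wc: "w \<in> carrier_vec nx" using yw by auto
        have xc: "x \<in> carrier_vec nx" using xX by auto
        have ylin: "\<And>i. i < qx \<Longrightarrow> (Hx *\<^sub>v x) $ i = t * (Hx *\<^sub>v y) $ i + (1 - t) * (Hx *\<^sub>v w) $ i"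
        proof -
          fix i assume i: "i < qx"
          have "Hx *\<^sub>v x = t \<cdot>\<^sub>v (Hx *\<^sub>v y) + (1 - t) \<cdot>\<^sub>v (Hx *\<^sub>v w)"
            unfolding xe using Hc yc wc
            by (simp add: mult_add_distrib_mat_vec[of Hx qx nx] mult_mat_vec[OF Hc])
          thus "(Hx *\<^sub>v x) $ i = t * (Hx *\<^sub>v y) $ i + (1 - t) * (Hx *\<^sub>v w) $ i"
            using i Hc by simp
        qed
        have yle: "\<And>i. i < qx \<Longrightarrow> (Hx *\<^sub>v y) $ i \<le> 1" and wle: "\<And>i. i < qx \<Longrightarrow> (Hx *\<^sub>v w) $ i \<le> 1"
          using yw unfolding less_eq_vec_def ones_vec_def by auto
        define d where "d = y - w"
        have dc: "d \<in> carrier_vec nx" unfolding d_def using yc wc by auto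
        have dnz: "d \<noteq> 0\<^sub>v nx"
        proof
          assume "d = 0\<^sub>v nx"
          hence "y = w" unfolding d_def using yc wc
            by (metis carrier_vecD eq_vecI index_minus_vec(1) index_zero_vec(1) right_minus_eq)
          thus False using yw by auto
        qed
        have dlin: "\<And>i. i < qx \<Longrightarrow> (Hx *\<^sub>v d) $ i = (Hx *\<^sub>v y) $ i - (Hx *\<^sub>v w) $ i"
          unfolding d_def using Hc yc wc by (simp add: mult_minus_distrib_mat_vec[of Hx qx nx])
        have dT: "\<forall>i<qx. (Hx *\<^sub>v x) $ i = 1 \<longrightarrow> (Hx *\<^sub>v d) $ i = 0"
        proof (intro allI impI)
          fix i assume i: "i < qx" and one: "(Hx *\<^sub>v x) $ i = 1"
          have e: "t * (Hx *\<^sub>v y) $ i + (1 - t) * (Hx *\<^sub>v w) $ i = 1" using ylin[OF i] one by simp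
          have a1: "(1 - t) * (Hx *\<^sub>v w) $ i \<le> (1 - t)" using wle[OF i] yw by simp
          have a2: "t * (Hx *\<^sub>v y) $ i \<le> t" using yle[OF i] yw by simp
          have "t * (Hx *\<^sub>v y) $ i \<ge> t" using e a1 by linarith
          hence y1: "(Hx *\<^sub>v y) $ i = 1" using a2 yw yle[OF i]
            by (metis antisym_conv mult_le_cancel_left_pos mult.right_neutral)
          have "(1 - t) * (Hx *\<^sub>v w) $ i \<ge> 1 - t" using e a2 by linarith
          hence w1: "(Hx *\<^sub>v w) $ i = 1" using a1 yw wle[OF i]
            by (metis antisym_conv diff_gt_0_iff_gt mult_le_cancel_left_pos mult.right_neutral)
          show "(Hx *\<^sub>v d) $ i = 0" using dlin[OF i] y1 w1 by simp
        qed
        define d2 where "d2 = w - y"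
        have d2c: "d2 \<in> carrier_vec nx" unfolding d2_def using yc wc by auto
        have d2nz: "d2 \<noteq> 0\<^sub>v nx"
        proof
          assume "d2 = 0\<^sub>v nx"
          hence "w = y" unfolding d2_def using yc wc
            by (metis carrier_vecD eq_vecI index_minus_vec(1) index_zero_vec(1) right_minus_eq)
          thus False using yw by auto
        qed
        have d2lin: "\<And>i. i < qx \<Longrightarrow> (Hx *\<^sub>v d2) $ i = - (Hx *\<^sub>v d) $ i"
          unfolding d2_def using Hc yc wc dlin by (simp add: mult_minus_distrib_mat_vec[of Hx qx nx])
        have d2T: "\<forall>i<qx. (Hx *\<^sub>v x) $ i = 1 \<longrightarrow> (Hx *\<^sub>v d2) $ i = 0"
          using dT d2lin by simp
        obtain s1 where s1: "s1 > 0" "Hx *\<^sub>v (x + s1 \<cdot>\<^sub>v d) \<le> ones_vec qx" "T x \<subset> T (x + s1 \<cdot>\<^sub>v d)"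
          using push_lemma[OF Hc bdd xc _ dc dnz dT] xX unfolding T_def by auto
        obtain s2 where s2: "s2 > 0" "Hx *\<^sub>v (x + s2 \<cdot>\<^sub>v d2) \<le> ones_vec qx" "T x \<subset> T (x + s2 \<cdot>\<^sub>v d2)"
          using push_lemma[OF Hc bdd xc _ d2c d2nz d2T] xX unfolding T_def by auto
        define x1 where "x1 = x + s1 \<cdot>\<^sub>v d"
        define x2 where "x2 = x + s2 \<cdot>\<^sub>v d2"
        have x1X: "x1 \<in> ?X0" unfolding x1_def using s1 xc dc by auto
        have x2X: "x2 \<in> ?X0" unfolding x2_def using s2 xc d2c by auto
        have finT: "finite (T z)" for z unfolding T_def by auto
        have c1: "card (T x) < card (T x1)" unfolding x1_def using s1(3) finT psubset_card_mono by blast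
        have c2: "card (T x) < card (T x2)" unfolding x2_def using s2(3) finT psubset_card_mono by blast
        have f1: "f x1 \<le> b" using less.IH[of "qx - card (T x1)"] c1 cardT[of x1] cardT[of x] nx x1X by auto
        have f2: "f x2 \<le> b" using less.IH[of "qx - card (T x2)"] c2 cardT[of x2] cardT[of x] nx x2X by auto
        define lam where "lam = s2 / (s1 + s2)"
        have lam: "0 \<le> lam" "lam \<le> 1" unfolding lam_def using s1 s2 by auto
        have xeq: "x = lam \<cdot>\<^sub>v x1 + (1 - lam) \<cdot>\<^sub>v x2"
        proof (rule eq_vecI)
          show "dim_vec x = dim_vec (lam \<cdot>\<^sub>v x1 + (1 - lam) \<cdot>\<^sub>v x2)"
            using xc dc d2c unfolding x1_def x2_def by simp
          fix i assume i: "i < dim_vec (lam \<cdot>\<^sub>v x1 + (1 - lam) \<cdot>\<^sub>v x2)"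
          hence i': "i < nx" using xc dc d2c unfolding x1_def x2_def by simp
          have "(lam \<cdot>\<^sub>v x1 + (1 - lam) \<cdot>\<^sub>v x2) $ i
              = lam * (x $ i + s1 * (y $ i - w $ i)) + (1 - lam) * (x $ i + s2 * (w $ i - y $ i))"
            using i' xc yc wc unfolding x1_def x2_def d_def d2_def by simp
          also have "\<dots> = x $ i + (lam * s1 - (1 - lam) * s2) * (y $ i - w $ i)"
            by (simp add: algebra_simps)
          also have "lam * s1 - (1 - lam) * s2 = 0" unfolding lam_def using s1 s2
            by (simp add: field_simps)
          finally have "(lam \<cdot>\<^sub>v x1 + (1 - lam) \<cdot>\<^sub>v x2) $ i = x $ i" by simp
          thus "x $ i = (lam \<cdot>\<^sub>v x1 + (1 - lam) \<cdot>\<^sub>v x2) $ i" by simp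
        qed
        have "f x = lam * f x1 + (1 - lam) * f x2"
          using f x1X x2X unfolding raff_def xeq by auto
        also have "\<dots> \<le> lam * b + (1 - lam) * b"
          using f1 f2 lam by (intro add_mono mult_left_mono) auto
        finally show ?thesis by (simp add: algebra_simps)
      qed
    qed
  qed
  thus ?thesis using x by auto
qed



definition vaff :: "nat \<Rightarrow> nat \<Rightarrow> (real vec \<Rightarrow> real vec) \<Rightarrow> bool" where
  "vaff n m f \<longleftrightarrow> (\<forall>y\<in>carrier_vec n. f y \<in> carrier_vec m) \<and>
     (\<forall>y\<in>carrier_vec n. \<forall>w\<in>carrier_vec n. \<forall>t.
      f (t \<cdot>\<^sub>v y + (1 - t) \<cdot>\<^sub>v w) = t \<cdot>\<^sub>v f y + (1 - t) \<cdot>\<^sub>v f w)"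

lemma vaff_id: "vaff n n (\<lambda>x. x)"
  unfolding vaff_def by auto

lemma vaff_const: "c \<in> carrier_vec m \<Longrightarrow> vaff n m (\<lambda>x. c)"
  unfolding vaff_def by (auto intro!: eq_vecI simp: algebra_simps)

lemma vaff_mult: fixes M :: "real mat" assumes M: "M \<in> carrier_mat m' m" and f: "vaff n m f"
  shows "vaff n m' (\<lambda>x. M *\<^sub>v f x)"
  unfolding vaff_def
proof (intro conjI ballI allI)
  fix y :: "real vec" assume "y \<in> carrier_vec n" thus "M *\<^sub>v f y \<in> carrier_vec m'" using f M unfolding vaff_def by auto
next
  fix y w :: "real vec" and t :: real assume y: "y \<in> carrier_vec n" and w: "w \<in> carrier_vec n"
  have fy: "f y \<in> carrier_vec m" and fw: "f w \<in> carrier_vec m" using f y w unfolding vaff_def by auto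
  have "f (t \<cdot>\<^sub>v y + (1 - t) \<cdot>\<^sub>v w) = t \<cdot>\<^sub>v f y + (1 - t) \<cdot>\<^sub>v f w" using f y w unfolding vaff_def by auto
  thus "M *\<^sub>v f (t \<cdot>\<^sub>v y + (1 - t) \<cdot>\<^sub>v w) = t \<cdot>\<^sub>v (M *\<^sub>v f y) + (1 - t) \<cdot>\<^sub>v (M *\<^sub>v f w)"
    using M fy fw by (simp add: mult_add_distrib_mat_vec[of M m' m] mult_mat_vec[OF M])
qed

lemma vaff_add: assumes f: "vaff n m f" and g: "vaff n m g"
  shows "vaff n m (\<lambda>x. f x + g x)"
  unfolding vaff_def
proof (intro conjI ballI allI)
  fix y :: "real vec" assume "y \<in> carrier_vec n" thus "f y + g y \<in> carrier_vec m" using f g unfolding vaff_def by auto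
next
  fix y w :: "real vec" and t :: real assume y: "y \<in> carrier_vec n" and w: "w \<in> carrier_vec n"
  have c: "f y \<in> carrier_vec m" "f w \<in> carrier_vec m" "g y \<in> carrier_vec m" "g w \<in> carrier_vec m"
    using f g y w unfolding vaff_def by auto
  show "f (t \<cdot>\<^sub>v y + (1 - t) \<cdot>\<^sub>v w) + g (t \<cdot>\<^sub>v y + (1 - t) \<cdot>\<^sub>v w) =
        t \<cdot>\<^sub>v (f y + g y) + (1 - t) \<cdot>\<^sub>v (f w + g w)"
  proof -
    have e: "f (t \<cdot>\<^sub>v y + (1 - t) \<cdot>\<^sub>v w) = t \<cdot>\<^sub>v f y + (1 - t) \<cdot>\<^sub>v f w"
     "g (t \<cdot>\<^sub>v y + (1 - t) \<cdot>\<^sub>v w) = t \<cdot>\<^sub>v g y + (1 - t) \<cdot>\<^sub>v g w" using f g y w unfolding vaff_def by auto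
    have d: "dim_vec (f y) = m" "dim_vec (f w) = m" "dim_vec (g y) = m" "dim_vec (g w) = m" using c by auto
    show ?thesis unfolding e by (intro eq_vecI) (auto simp: d algebra_simps)
  qed
qed

lemma vaff_minus: assumes f: "vaff n m f" and g: "vaff n m g"
  shows "vaff n m (\<lambda>x. f x - g x)"
  unfolding vaff_def
proof (intro conjI ballI allI)
  fix y :: "real vec" assume "y \<in> carrier_vec n" thus "f y - g y \<in> carrier_vec m" using f g unfolding vaff_def by auto
next
  fix y w :: "real vec" and t :: real assume y: "y \<in> carrier_vec n" and w: "w \<in> carrier_vec n"
  have c: "f y \<in> carrier_vec m" "f w \<in> carrier_vec m" "g y \<in> carrier_vec m" "g w \<in> carrier_vec m"
    using f g y w unfolding vaff_def by auto
  show "f (t \<cdot>\<^sub>v y + (1 - t) \<cdot>\<^sub>v w) - g (t \<cdot>\<^sub>v y + (1 - t) \<cdot>\<^sub>v w) =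
        t \<cdot>\<^sub>v (f y - g y) + (1 - t) \<cdot>\<^sub>v (f w - g w)"
  proof -
    have e: "f (t \<cdot>\<^sub>v y + (1 - t) \<cdot>\<^sub>v w) = t \<cdot>\<^sub>v f y + (1 - t) \<cdot>\<^sub>v f w"
     "g (t \<cdot>\<^sub>v y + (1 - t) \<cdot>\<^sub>v w) = t \<cdot>\<^sub>v g y + (1 - t) \<cdot>\<^sub>v g w" using f g y w unfolding vaff_def by auto
    have d: "dim_vec (f y) = m" "dim_vec (f w) = m" "dim_vec (g y) = m" "dim_vec (g w) = m" using c by auto
    show ?thesis unfolding e by (intro eq_vecI) (auto simp: d algebra_simps)
  qed
qed

lemma vaff_smult: assumes f: "vaff n m f"
  shows "vaff n m (\<lambda>x. c \<cdot>\<^sub>v f x)"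
  unfolding vaff_def
proof (intro conjI ballI allI)
  fix y :: "real vec" assume "y \<in> carrier_vec n" thus "c \<cdot>\<^sub>v f y \<in> carrier_vec m" using f unfolding vaff_def by auto
next
  fix y w :: "real vec" and t :: real assume y: "y \<in> carrier_vec n" and w: "w \<in> carrier_vec n"
  have c: "f y \<in> carrier_vec m" "f w \<in> carrier_vec m"
    using f y w unfolding vaff_def by auto
  show "c \<cdot>\<^sub>v f (t \<cdot>\<^sub>v y + (1 - t) \<cdot>\<^sub>v w) = t \<cdot>\<^sub>v (c \<cdot>\<^sub>v f y) + (1 - t) \<cdot>\<^sub>v (c \<cdot>\<^sub>v f w)"
  proof -
    have e: "f (t \<cdot>\<^sub>v y + (1 - t) \<cdot>\<^sub>v w) = t \<cdot>\<^sub>v f y + (1 - t) \<cdot>\<^sub>v f w"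
      using f y w unfolding vaff_def by auto
    have d: "dim_vec (f y) = m" "dim_vec (f w) = m" using c by auto
    show ?thesis unfolding e by (intro eq_vecI) (auto simp: d algebra_simps)
  qed
qed

lemma vaff_append: assumes f: "vaff n m1 f" and g: "vaff n m2 g"
  shows "vaff n (m1 + m2) (\<lambda>x. f x @\<^sub>v g x)"
  unfolding vaff_def
proof (intro conjI ballI allI)
  fix y :: "real vec" assume "y \<in> carrier_vec n" thus "f y @\<^sub>v g y \<in> carrier_vec (m1 + m2)" using f g unfolding vaff_def by auto
next
  fix y w :: "real vec" and t :: real assume y: "y \<in> carrier_vec n" and w: "w \<in> carrier_vec n"
  have c: "f y \<in> carrier_vec m1" "f w \<in> carrier_vec m1" "g y \<in> carrier_vec m2" "g w \<in> carrier_vec m2"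
    using f g y w unfolding vaff_def by auto
  have e: "f (t \<cdot>\<^sub>v y + (1 - t) \<cdot>\<^sub>v w) = t \<cdot>\<^sub>v f y + (1 - t) \<cdot>\<^sub>v f w"
     "g (t \<cdot>\<^sub>v y + (1 - t) \<cdot>\<^sub>v w) = t \<cdot>\<^sub>v g y + (1 - t) \<cdot>\<^sub>v g w" using f g y w unfolding vaff_def by auto
  show "f (t \<cdot>\<^sub>v y + (1 - t) \<cdot>\<^sub>v w) @\<^sub>v g (t \<cdot>\<^sub>v y + (1 - t) \<cdot>\<^sub>v w) =
        t \<cdot>\<^sub>v (f y @\<^sub>v g y) + (1 - t) \<cdot>\<^sub>v (f w @\<^sub>v g w)"
    unfolding e using c by (intro eq_vecI) (auto simp: carrier_vecD)
qed

lemma raff_idx: assumes f: "vaff n m f" and r: "r < m"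
  shows "raff n (\<lambda>x. f x $ r)"
  unfolding raff_def
proof (intro ballI allI)
  fix y w :: "real vec" and t :: real assume y: "y \<in> carrier_vec n" and w: "w \<in> carrier_vec n"
  have c: "f y \<in> carrier_vec m" "f w \<in> carrier_vec m"
    using f y w unfolding vaff_def by auto
  have e: "f (t \<cdot>\<^sub>v y + (1 - t) \<cdot>\<^sub>v w) = t \<cdot>\<^sub>v f y + (1 - t) \<cdot>\<^sub>v f w" using f y w unfolding vaff_def by auto
  show "f (t \<cdot>\<^sub>v y + (1 - t) \<cdot>\<^sub>v w) $ r = t * f y $ r + (1 - t) * f w $ r"
    unfolding e using c r by auto
qed

lemma carrier_diag_rep: "M \<in> carrier_mat r c \<Longrightarrow> diag_block_mat (replicate k M) \<in> carrier_mat (k * r) (k * c)"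
  unfolding carrier_mat_def by (auto simp: dim_diag_block_mat sum_list_replicate)

lemma Hp_mult: assumes Hx: "Hx \<in> carrier_mat qx nx" and Fp: "Fp \<in> carrier_mat m n"
  and a: "a \<in> carrier_vec nx" and b: "b \<in> carrier_vec n"
  shows "diag_block_mat [Hx, Fp] *\<^sub>v (a @\<^sub>v b) = (Hx *\<^sub>v a) @\<^sub>v (Fp *\<^sub>v b)"
proof -
  have "diag_block_mat [Hx, Fp] = four_block_mat Hx (0\<^sub>m qx n) (0\<^sub>m m nx) Fp"
    unfolding diag_block_mat.simps(2)[of Hx "[Fp]"] diag_block_mat_singleton Let_def using Hx Fp by simp
  also have "\<dots> *\<^sub>v (a @\<^sub>v b) = (Hx *\<^sub>v a + 0\<^sub>m qx n *\<^sub>v b) @\<^sub>v (0\<^sub>m m nx *\<^sub>v a + Fp *\<^sub>v b)"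
    by (rule four_block_mat_mult_vec[OF Hx _ _ Fp a b]) auto
  also have "\<dots> = (Hx *\<^sub>v a) @\<^sub>v (Fp *\<^sub>v b)" using Hx Fp a b by auto
  finally show ?thesis .
qed

lemma bdd_sp: assumes S: "S \<subseteq> carrier_vec n" and b: "bounded_vset S"
  shows "bdd_above ((\<lambda>x. g \<bullet> x) ` S)"
proof -
  from b obtain M where M: "\<forall>x\<in>S. \<forall>i<dim_vec x. \<bar>x $ i\<bar> \<le> M" unfolding bounded_vset_def by auto
  have "g \<bullet> x \<le> (\<Sum>k<n. \<bar>g $ k\<bar> * M)" if x: "x \<in> S" for x
  proof -
    have xc: "x \<in> carrier_vec n" using S x by auto
    have "g \<bullet> x = (\<Sum>k<n. g $ k * x $ k)" using sp_sum[OF xc] .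
    also have "\<dots> \<le> (\<Sum>k<n. \<bar>g $ k\<bar> * M)"
    proof (rule sum_mono)
      fix k assume "k \<in> {..<n}"
      hence "\<bar>x $ k\<bar> \<le> M" using M x xc by auto
      hence "\<bar>g $ k\<bar> * \<bar>x $ k\<bar> \<le> \<bar>g $ k\<bar> * M" by (intro mult_left_mono) auto
      moreover have "g $ k * x $ k \<le> \<bar>g $ k\<bar> * \<bar>x $ k\<bar>" by (metis abs_ge_self abs_mult)
      ultimately show "g $ k * x $ k \<le> \<bar>g $ k\<bar> * M" by linarith
    qed
    finally show ?thesis .
  qed
  thus ?thesis by (intro bdd_aboveI[where M="\<Sum>k<n. \<bar>g $ k\<bar> * M"]) auto
qed

lemma sup_le_iff_sp: assumes S: "S \<subseteq> carrier_vec n" and b: "bounded_vset S" and ne: "S \<noteq> {}"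
  shows "(\<forall>x\<in>S. g \<bullet> x \<le> a) \<longleftrightarrow> Sup ((\<lambda>x. g \<bullet> x) ` S) \<le> a"
  using cSup_le_iff[of "(\<lambda>x. g \<bullet> x) ` S" a] bdd_sp[OF S b] ne by auto

lemma le_sup_sp: assumes S: "S \<subseteq> carrier_vec n" and b: "bounded_vset S" and x: "x \<in> S"
  shows "g \<bullet> x \<le> Sup ((\<lambda>x. g \<bullet> x) ` S)"
  using cSup_upper[of "g \<bullet> x" "(\<lambda>x. g \<bullet> x) ` S"] bdd_sp[OF S b] x by auto



lemma aff_mat_carrier: "M 0 \<in> carrier_mat a b \<Longrightarrow> aff_mat np M \<theta> \<in> carrier_mat a b"
  unfolding aff_mat_def carrier_mat_def by auto

lemma aff_mat_mult:
  assumes M: "\<And>i. i \<le> np \<Longrightarrow> M i \<in> carrier_mat a b" and X: "X \<in> carrier_vec b" and r: "r < a"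
  shows "(aff_mat np M \<theta> *\<^sub>v X) $ r = (M 0 *\<^sub>v X) $ r + (\<Sum>c<np. \<theta> $ c * (M (c+1) *\<^sub>v X) $ r)"
proof -
  have M0: "M 0 \<in> carrier_mat a b" using M by auto
  have "(aff_mat np M \<theta> *\<^sub>v X) $ r = (\<Sum>k<b. aff_mat np M \<theta> $$ (r,k) * X $ k)"
    using mv_idx[OF aff_mat_carrier[of M a b np \<theta>, OF M0] X r] .
  also have "\<dots> = (\<Sum>k<b. (M 0 $$ (r,k) + (\<Sum>i=1..np. \<theta> $ (i - 1) * M i $$ (r, k))) * X $ k)"
    using M0 r by (intro sum.cong) (auto simp: aff_mat_def)
  also have "\<dots> = (\<Sum>k<b. M 0 $$ (r,k) * X $ k) + (\<Sum>i=1..np. \<theta> $ (i - 1) * (\<Sum>k<b. M i $$ (r, k) * X $ k))"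
  proof -
    have "(\<Sum>k<b. (M 0 $$ (r,k) + (\<Sum>i=1..np. \<theta> $ (i - 1) * M i $$ (r, k))) * X $ k)
       = (\<Sum>k<b. M 0 $$ (r,k) * X $ k) + (\<Sum>k<b. \<Sum>i=1..np. \<theta> $ (i - 1) * (M i $$ (r, k) * X $ k))"
      by (simp add: distrib_right sum.distrib sum_distrib_right mult.assoc)
    also have "(\<Sum>k<b. \<Sum>i=1..np. \<theta> $ (i - 1) * (M i $$ (r, k) * X $ k))
       = (\<Sum>i=1..np. \<Sum>k<b. \<theta> $ (i - 1) * (M i $$ (r, k) * X $ k))"
      by (rule sum.swap)
    also have "\<dots> = (\<Sum>i=1..np. \<theta> $ (i - 1) * (\<Sum>k<b. M i $$ (r, k) * X $ k))"
      by (simp add: sum_distrib_left)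
    finally show ?thesis .
  qed
  also have "(\<Sum>i=1..np. \<theta> $ (i - 1) * (\<Sum>k<b. M i $$ (r, k) * X $ k))
      = (\<Sum>c<np. \<theta> $ c * (\<Sum>k<b. M (c+1) $$ (r, k) * X $ k))"
    by (simp add: sum.atLeast1_atMost_eq)
  also have "\<dots> = (\<Sum>c<np. \<theta> $ c * (M (c+1) *\<^sub>v X) $ r)"
    using mv_idx[OF M X r] by (intro sum.cong) auto
  also have "(\<Sum>k<b. M 0 $$ (r,k) * X $ k) = (M 0 *\<^sub>v X) $ r" using mv_idx[OF M0 X r] by simp
  finally show ?thesis .
qed

lemma tube_char:
  fixes Hx :: "real mat"
  assumes Hc: "Hx \<in> carrier_mat qx nx"
    and bdd: "bounded_vset {x \<in> carrier_vec nx. Hx *\<^sub>v x \<le> ones_vec qx}"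
    and z: "z \<in> carrier_vec nx" and a: "\<alpha> \<ge> 0"
  shows "(X \<in> carrier_vec nx \<and> Hx *\<^sub>v (X - z) \<le> \<alpha> \<cdot>\<^sub>v ones_vec qx) \<longleftrightarrow>
         (\<exists>x. x \<in> carrier_vec nx \<and> Hx *\<^sub>v x \<le> ones_vec qx \<and> X = z + \<alpha> \<cdot>\<^sub>v x)"
proof
  assume "\<exists>x. x \<in> carrier_vec nx \<and> Hx *\<^sub>v x \<le> ones_vec qx \<and> X = z + \<alpha> \<cdot>\<^sub>v x"
  then obtain x where x: "x \<in> carrier_vec nx" "Hx *\<^sub>v x \<le> ones_vec qx" "X = z + \<alpha> \<cdot>\<^sub>v x" by auto
  have "X - z = \<alpha> \<cdot>\<^sub>v x" using x z by (intro eq_vecI) auto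
  hence "Hx *\<^sub>v (X - z) = \<alpha> \<cdot>\<^sub>v (Hx *\<^sub>v x)" using mult_mat_vec[OF Hc x(1)] by simp
  moreover have "\<alpha> \<cdot>\<^sub>v (Hx *\<^sub>v x) \<le> \<alpha> \<cdot>\<^sub>v ones_vec qx"
    using x(2) a unfolding less_eq_vec_def by (auto intro: mult_left_mono)
  ultimately show "X \<in> carrier_vec nx \<and> Hx *\<^sub>v (X - z) \<le> \<alpha> \<cdot>\<^sub>v ones_vec qx" using x z by auto
next
  assume A: "X \<in> carrier_vec nx \<and> Hx *\<^sub>v (X - z) \<le> \<alpha> \<cdot>\<^sub>v ones_vec qx"
  hence Xc: "X \<in> carrier_vec nx" and le: "Hx *\<^sub>v (X - z) \<le> \<alpha> \<cdot>\<^sub>v ones_vec qx" by auto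
  have dc: "X - z \<in> carrier_vec nx" using Xc z by auto
  have lei: "\<And>i. i < qx \<Longrightarrow> (Hx *\<^sub>v (X - z)) $ i \<le> \<alpha>"
    using le Hc unfolding less_eq_vec_def ones_vec_def by auto
  show "\<exists>x. x \<in> carrier_vec nx \<and> Hx *\<^sub>v x \<le> ones_vec qx \<and> X = z + \<alpha> \<cdot>\<^sub>v x"
  proof (cases "\<alpha> > 0")
    case True
    define x where "x = (1 / \<alpha>) \<cdot>\<^sub>v (X - z)"
    have xc: "x \<in> carrier_vec nx" unfolding x_def using dc by auto
    have "Hx *\<^sub>v x \<le> ones_vec qx"
      unfolding less_eq_vec_def
    proof (intro conjI allI impI)
      show "dim_vec (Hx *\<^sub>v x) = dim_vec (ones_vec qx)" using Hc by (simp add: ones_vec_def)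
      fix i assume "i < dim_vec (ones_vec qx)"
      hence i: "i < qx" by (simp add: ones_vec_def)
      have "(Hx *\<^sub>v x) $ i = (1 / \<alpha>) * (Hx *\<^sub>v (X - z)) $ i"
        unfolding x_def using mult_mat_vec[OF Hc dc] Hc i by simp
      also have "\<dots> \<le> (1 / \<alpha>) * \<alpha>" using lei[OF i] True by (intro mult_left_mono) auto
      finally show "(Hx *\<^sub>v x) $ i \<le> ones_vec qx $ i" using True i by (simp add: ones_vec_def)
    qed
    moreover have "X = z + \<alpha> \<cdot>\<^sub>v x" unfolding x_def using Xc z True by (intro eq_vecI) auto
    ultimately show ?thesis using xc by auto
  next
    case False
    hence a0: "\<alpha> = 0" using a by auto
    have "X - z = 0\<^sub>v nx"
    proof (rule ccontr)
      assume "X - z \<noteq> 0\<^sub>v nx"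
      then obtain k where k: "k < nx" "(X - z) $ k \<noteq> 0" using dc
        by (metis carrier_vecD eq_vecI index_zero_vec(1) index_zero_vec(2))
      from bdd obtain M where M: "\<forall>y\<in>{x \<in> carrier_vec nx. Hx *\<^sub>v x \<le> ones_vec qx}. \<forall>i<dim_vec y. \<bar>y $ i\<bar> \<le> M"
        unfolding bounded_vset_def by auto
      define s where "s = (\<bar>M\<bar> + 1) / \<bar>(X - z) $ k\<bar>"
      have s0: "s \<ge> 0" unfolding s_def by auto
      have "Hx *\<^sub>v (s \<cdot>\<^sub>v (X - z)) \<le> ones_vec qx"
        unfolding less_eq_vec_def
      proof (intro conjI allI impI)
        show "dim_vec (Hx *\<^sub>v (s \<cdot>\<^sub>v (X - z))) = dim_vec (ones_vec qx)" using Hc by (simp add: ones_vec_def)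
        fix i assume "i < dim_vec (ones_vec qx)"
        hence i: "i < qx" by (simp add: ones_vec_def)
        have "(Hx *\<^sub>v (s \<cdot>\<^sub>v (X - z))) $ i = s * (Hx *\<^sub>v (X - z)) $ i"
          using mult_mat_vec[OF Hc dc] Hc i by simp
        also have "\<dots> \<le> 0" using lei[OF i] a0 s0 by (simp add: mult_nonneg_nonpos)
        finally show "(Hx *\<^sub>v (s \<cdot>\<^sub>v (X - z))) $ i \<le> ones_vec qx $ i" using i by (simp add: ones_vec_def)
      qed
      moreover have "s \<cdot>\<^sub>v (X - z) \<in> carrier_vec nx" using dc by auto
      ultimately have "\<bar>(s \<cdot>\<^sub>v (X - z)) $ k\<bar> \<le> M" using M k
        by (metis (no_types, lifting) carrier_vecD mem_Collect_eq)
      moreover have "\<bar>(s \<cdot>\<^sub>v (X - z)) $ k\<bar> = \<bar>M\<bar> + 1"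
      proof -
        have "dim_vec (X - z) = nx" using z by auto
        hence "(s \<cdot>\<^sub>v (X - z)) $ k = s * (X - z) $ k" using k by auto
        hence "\<bar>(s \<cdot>\<^sub>v (X - z)) $ k\<bar> = s * \<bar>(X - z) $ k\<bar>" using s0 by (simp add: abs_mult)
        thus ?thesis unfolding s_def using k by simp
      qed
      ultimately show False by linarith
    qed
    hence "X = z" using Xc z
      by (metis carrier_vecD eq_vecI index_minus_vec(1) index_zero_vec(1) right_minus_eq)
    moreover have "Hx *\<^sub>v 0\<^sub>v nx \<le> ones_vec qx" using Hc unfolding less_eq_vec_def ones_vec_def by auto
    moreover have "z = z + \<alpha> \<cdot>\<^sub>v 0\<^sub>v nx" using z by (intro eq_vecI) auto
    ultimately show ?thesis by (intro exI[of _ "0\<^sub>v nx"]) auto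
  qed
qed



lemma sup_aff:
  assumes S: "S \<subseteq> carrier_vec n" and b: "bounded_vset S" and ne: "S \<noteq> {}" and a: "\<alpha> \<ge> (0::real)"
  shows "(\<forall>x\<in>S. c + \<alpha> * (g \<bullet> x) \<le> \<beta>) \<longleftrightarrow> c + \<alpha> * Sup ((\<lambda>x. g \<bullet> x) ` S) \<le> \<beta>"
proof (cases "\<alpha> = 0")
  case True thus ?thesis using ne by auto
next
  case False
  hence ap: "\<alpha> > 0" using a by auto
  have "(\<forall>x\<in>S. c + \<alpha> * (g \<bullet> x) \<le> \<beta>) \<longleftrightarrow> (\<forall>x\<in>S. g \<bullet> x \<le> (\<beta> - c) / \<alpha>)"
    using ap by (simp add: field_simps)
  also have "\<dots> \<longleftrightarrow> Sup ((\<lambda>x. g \<bullet> x) ` S) \<le> (\<beta> - c) / \<alpha>" by (rule sup_le_iff_sp[OF S b ne])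
  also have "\<dots> \<longleftrightarrow> c + \<alpha> * Sup ((\<lambda>x. g \<bullet> x) ` S) \<le> \<beta>" using ap by (simp add: field_simps)
  finally show ?thesis .
qed

lemma farkas_rows:
  fixes E Ht :: "real mat" and e \<beta> ht :: "real vec"
  assumes E: "E \<in> carrier_mat R np" and e: "e \<in> carrier_vec R" and \<beta>: "\<beta> \<in> carrier_vec R"
    and Ht: "Ht \<in> carrier_mat qt np" and ht: "ht \<in> carrier_vec qt"
    and feas: "\<exists>\<theta>0\<in>carrier_vec np. Ht *\<^sub>v \<theta>0 \<le> ht"
  shows "(\<forall>\<theta>\<in>carrier_vec np. Ht *\<^sub>v \<theta> \<le> ht \<longrightarrow> (\<forall>r<R. e $ r + (E *\<^sub>v \<theta>) $ r \<le> \<beta> $ r)) \<longleftrightarrow>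
     (\<exists>M. M \<in> carrier_mat R qt \<and> (\<forall>r<R. \<forall>c<qt. M $$ (r, c) \<ge> 0) \<and> M *\<^sub>v ht + e \<le> \<beta> \<and> E = M * Ht)"
proof
  assume L: "\<forall>\<theta>\<in>carrier_vec np. Ht *\<^sub>v \<theta> \<le> ht \<longrightarrow> (\<forall>r<R. e $ r + (E *\<^sub>v \<theta>) $ r \<le> \<beta> $ r)"
  have "\<forall>r. \<exists>lam. r < R \<longrightarrow> (\<forall>i<qt. lam i \<ge> 0) \<and> (\<forall>k<np. row E r $ k = (\<Sum>i<qt. lam i * Ht $$ (i,k)))
            \<and> (\<Sum>i<qt. lam i * ht $ i) \<le> \<beta> $ r - e $ r"
  proof (intro allI impI)
    fix r
    show "\<exists>lam. r < R \<longrightarrow> (\<forall>i<qt. lam i \<ge> 0) \<and> (\<forall>k<np. row E r $ k = (\<Sum>i<qt. lam i * Ht $$ (i,k)))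
            \<and> (\<Sum>i<qt. lam i * ht $ i) \<le> \<beta> $ r - e $ r"
    proof (cases "r < R")
      case True
      have "\<forall>\<theta>\<in>carrier_vec np. Ht *\<^sub>v \<theta> \<le> ht \<longrightarrow> row E r \<bullet> \<theta> \<le> \<beta> $ r - e $ r"
      proof (intro ballI impI)
        fix \<theta> :: "real vec" assume th: "\<theta> \<in> carrier_vec np" and hle: "Ht *\<^sub>v \<theta> \<le> ht"
        have "e $ r + (E *\<^sub>v \<theta>) $ r \<le> \<beta> $ r" using L th hle True by blast
        moreover have "(E *\<^sub>v \<theta>) $ r = row E r \<bullet> \<theta>" using E True by simp
        ultimately show "row E r \<bullet> \<theta> \<le> \<beta> $ r - e $ r" by linarith
      qed
      from farkas_affine[OF Ht ht _ feas this] E True show ?thesis by auto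
    qed auto
  qed
  from choice[OF this] obtain lam where lam0: "\<forall>r. r < R \<longrightarrow> (\<forall>i<qt. lam r i \<ge> 0) \<and> (\<forall>k<np. row E r $ k = (\<Sum>i<qt. lam r i * Ht $$ (i,k)))
            \<and> (\<Sum>i<qt. lam r i * ht $ i) \<le> \<beta> $ r - e $ r"
    by blast
  have lam: "\<And>r. r < R \<Longrightarrow> (\<forall>i<qt. lam r i \<ge> 0) \<and> (\<forall>k<np. row E r $ k = (\<Sum>i<qt. lam r i * Ht $$ (i,k)))
            \<and> (\<Sum>i<qt. lam r i * ht $ i) \<le> \<beta> $ r - e $ r" using lam0 by blast
  define M where "M = mat R qt (\<lambda>(r, i). lam r i)"
  have Mc: "M \<in> carrier_mat R qt" unfolding M_def by auto
  show "\<exists>M. M \<in> carrier_mat R qt \<and> (\<forall>r<R. \<forall>c<qt. M $$ (r, c) \<ge> 0) \<and> M *\<^sub>v ht + e \<le> \<beta> \<and> E = M * Ht"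
  proof (rule exI[of _ M], intro conjI)
    show "M \<in> carrier_mat R qt" by fact
    show "\<forall>r<R. \<forall>c<qt. M $$ (r, c) \<ge> 0" unfolding M_def using lam by auto
    show "M *\<^sub>v ht + e \<le> \<beta>"
      unfolding less_eq_vec_def
    proof (intro conjI allI impI)
      show "dim_vec (M *\<^sub>v ht + e) = dim_vec \<beta>" using e \<beta> by auto
      fix r assume "r < dim_vec \<beta>"
      hence r: "r < R" using \<beta> by auto
      have "(M *\<^sub>v ht) $ r = (\<Sum>i<qt. M $$ (r, i) * ht $ i)" using mv_idx[OF Mc ht r] .
      also have "\<dots> = (\<Sum>i<qt. lam r i * ht $ i)" unfolding M_def using r by (intro sum.cong) auto
      finally show "(M *\<^sub>v ht + e) $ r \<le> \<beta> $ r" using lam[OF r] e r by auto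
    qed
    show "E = M * Ht"
    proof (rule eq_matI)
      show "dim_row E = dim_row (M * Ht)" "dim_col E = dim_col (M * Ht)" using E Mc Ht by auto
      fix r k assume "r < dim_row (M * Ht)" "k < dim_col (M * Ht)"
      hence r: "r < R" and k: "k < np" using Mc Ht by auto
      have "(M * Ht) $$ (r, k) = row M r \<bullet> col Ht k" using Mc Ht r k by auto
      also have "\<dots> = (\<Sum>i<qt. row M r $ i * col Ht k $ i)" by (rule sp_sum) (use Ht in auto)
      also have "\<dots> = (\<Sum>i<qt. lam r i * Ht $$ (i, k))" unfolding M_def using r k Ht by (intro sum.cong) auto
      also have "\<dots> = row E r $ k" using lam[OF r] k by auto
      also have "\<dots> = E $$ (r, k)" using E r k by auto
      finally show "E $$ (r, k) = (M * Ht) $$ (r, k)" by simp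
    qed
  qed
next
  assume "\<exists>M. M \<in> carrier_mat R qt \<and> (\<forall>r<R. \<forall>c<qt. M $$ (r, c) \<ge> 0) \<and> M *\<^sub>v ht + e \<le> \<beta> \<and> E = M * Ht"
  then obtain M where Mc: "M \<in> carrier_mat R qt" and M0: "\<forall>r<R. \<forall>c<qt. M $$ (r, c) \<ge> 0"
    and Mle: "M *\<^sub>v ht + e \<le> \<beta>" and EM: "E = M * Ht" by auto
  show "\<forall>\<theta>\<in>carrier_vec np. Ht *\<^sub>v \<theta> \<le> ht \<longrightarrow> (\<forall>r<R. e $ r + (E *\<^sub>v \<theta>) $ r \<le> \<beta> $ r)"
  proof (intro ballI impI allI)
    fix \<theta> r assume th: "\<theta> \<in> carrier_vec np" and hle: "Ht *\<^sub>v \<theta> \<le> ht" and r: "r < R"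
    have Hth: "Ht *\<^sub>v \<theta> \<in> carrier_vec qt" using Ht th by auto
    have "(E *\<^sub>v \<theta>) $ r = (M *\<^sub>v (Ht *\<^sub>v \<theta>)) $ r" unfolding EM using Mc Ht th by simp
    also have "\<dots> = (\<Sum>i<qt. M $$ (r, i) * (Ht *\<^sub>v \<theta>) $ i)" using mv_idx[OF Mc Hth r] .
    also have "\<dots> \<le> (\<Sum>i<qt. M $$ (r, i) * ht $ i)"
    proof (rule sum_mono)
      fix i assume "i \<in> {..<qt}"
      hence i: "i < qt" by auto
      have "(Ht *\<^sub>v \<theta>) $ i \<le> ht $ i" using hle i ht unfolding less_eq_vec_def by auto
      thus "M $$ (r, i) * (Ht *\<^sub>v \<theta>) $ i \<le> M $$ (r, i) * ht $ i" using M0 r i by (intro mult_left_mono) auto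
    qed
    also have "\<dots> = (M *\<^sub>v ht) $ r" using mv_idx[OF Mc ht r] by simp
    finally have "(E *\<^sub>v \<theta>) $ r \<le> (M *\<^sub>v ht) $ r" .
    moreover have "(M *\<^sub>v ht) $ r + e $ r \<le> \<beta> $ r" using Mle r e Mc unfolding less_eq_vec_def by auto
    ultimately show "e $ r + (E *\<^sub>v \<theta>) $ r \<le> \<beta> $ r" by linarith
  qed
qed



declare diag_block_mat.simps(2)[simp del]

lemma vec_le_iff: "v \<in> carrier_vec m \<Longrightarrow> w \<in> carrier_vec m \<Longrightarrow> v \<le> w \<longleftrightarrow> (\<forall>i<m. v $ i \<le> w $ i)"
  unfolding less_eq_vec_def by auto

lemma ball_less_add: fixes q m :: nat shows "(\<forall>r<q + m. P r) \<longleftrightarrow> (\<forall>r<q. P r) \<and> (\<forall>r<m. P (q + r))"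
proof
  assume H: "\<forall>r<q + m. P r"
  show "(\<forall>r<q. P r) \<and> (\<forall>r<m. P (q + r))"
  proof (intro conjI allI impI)
    fix r assume "r < q" hence "r < q + m" by simp thus "P r" using H by blast
  next
    fix r assume "r < m" hence "q + r < q + m" by simp thus "P (q + r)" using H by blast
  qed
next
  assume H: "(\<forall>r<q. P r) \<and> (\<forall>r<m. P (q + r))"
  show "\<forall>r<q + m. P r"
  proof (intro allI impI)
    fix r assume r: "r < q + m"
    show "P r"
    proof (cases "r < q")
      case True thus ?thesis using H by auto
    next
      case False
      hence "r = q + (r - q)" "r - q < m" using r by auto
      thus ?thesis using H by (metis (no_types))
    qed
  qed
qed

lemma one_part:
  fixes Hx :: "real mat"
  assumes Hx: "Hx \<in> carrier_mat qx nx" and a: "a \<in> carrier_vec nx"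
    and Wx: "Wx \<subseteq> carrier_vec nx" "Wx \<noteq> {}" "bounded_vset Wx"
  shows "(\<forall>wx\<in>Wx. a + wx \<in> carrier_vec nx \<and> Hx *\<^sub>v (a + wx) \<le> \<gamma> \<cdot>\<^sub>v ones_vec qx) \<longleftrightarrow>
         (\<forall>r<qx. (Hx *\<^sub>v a) $ r + Sup ((\<lambda>w. row Hx r \<bullet> w) ` Wx) \<le> \<gamma>)"
proof -
  have "(\<forall>wx\<in>Wx. a + wx \<in> carrier_vec nx \<and> Hx *\<^sub>v (a + wx) \<le> \<gamma> \<cdot>\<^sub>v ones_vec qx) \<longleftrightarrow>
        (\<forall>wx\<in>Wx. \<forall>r<qx. (Hx *\<^sub>v a) $ r + 1 * (row Hx r \<bullet> wx) \<le> \<gamma>)"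
  proof (intro ball_cong refl)
    fix wx assume "wx \<in> Wx"
    hence wx: "wx \<in> carrier_vec nx" using Wx by auto
    have e: "Hx *\<^sub>v (a + wx) = Hx *\<^sub>v a + Hx *\<^sub>v wx" using Hx a wx by (simp add: mult_add_distrib_mat_vec[of Hx qx nx])
    have "Hx *\<^sub>v (a + wx) \<le> \<gamma> \<cdot>\<^sub>v ones_vec qx \<longleftrightarrow> (\<forall>r<qx. (Hx *\<^sub>v (a + wx)) $ r \<le> (\<gamma> \<cdot>\<^sub>v ones_vec qx) $ r)"
      by (rule vec_le_iff) (use Hx a wx in \<open>auto simp: ones_vec_def\<close>)
    also have "\<dots> \<longleftrightarrow> (\<forall>r<qx. (Hx *\<^sub>v a) $ r + 1 * (row Hx r \<bullet> wx) \<le> \<gamma>)"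
      unfolding e using Hx a wx by (simp add: ones_vec_def)
    finally show "(a + wx \<in> carrier_vec nx \<and> Hx *\<^sub>v (a + wx) \<le> \<gamma> \<cdot>\<^sub>v ones_vec qx) \<longleftrightarrow>
        (\<forall>r<qx. (Hx *\<^sub>v a) $ r + 1 * (row Hx r \<bullet> wx) \<le> \<gamma>)" using a wx by auto
  qed
  also have "\<dots> \<longleftrightarrow> (\<forall>r<qx. \<forall>wx\<in>Wx. (Hx *\<^sub>v a) $ r + 1 * (row Hx r \<bullet> wx) \<le> \<gamma>)" by blast
  also have "\<dots> \<longleftrightarrow> (\<forall>r<qx. (Hx *\<^sub>v a) $ r + 1 * Sup ((\<lambda>w. row Hx r \<bullet> w) ` Wx) \<le> \<gamma>)"
    using sup_aff[OF Wx(1) Wx(3) Wx(2), of 1] by simp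
  finally show ?thesis by simp
qed

lemma split_cond:
  fixes Hx Fp :: "real mat"
  assumes Hx: "Hx \<in> carrier_mat qx nx" and Fp: "Fp \<in> carrier_mat mF nY"
    and a: "a \<in> carrier_vec nx" and z': "z' \<in> carrier_vec nx" and b: "b \<in> carrier_vec nY"
    and Wx: "Wx \<subseteq> carrier_vec nx" "Wx \<noteq> {}" "bounded_vset Wx"
    and Wy: "Wy \<subseteq> carrier_vec nY" "Wy \<noteq> {}" "bounded_vset Wy"
  shows "((\<forall>wx\<in>Wx. a + wx \<in> {x \<in> carrier_vec nx. Hx *\<^sub>v (x - z') \<le> \<gamma> \<cdot>\<^sub>v ones_vec qx})
        \<and> (\<forall>wy\<in>Wy. b + wy \<in> {y \<in> carrier_vec nY. Fp *\<^sub>v y \<le> ones_vec mF})) \<longleftrightarrow>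
      (\<forall>r<qx + mF. (diag_block_mat [Hx, Fp] *\<^sub>v ((a - z') @\<^sub>v b)) $ r \<le>
          (((\<gamma> \<cdot>\<^sub>v ones_vec qx) @\<^sub>v ones_vec mF) - (row_max Hx Wx @\<^sub>v row_max Fp Wy)) $ r)"
proof -
  have amz: "a - z' \<in> carrier_vec nx" using a z' by auto
  have P1: "(\<forall>wx\<in>Wx. a + wx \<in> {x \<in> carrier_vec nx. Hx *\<^sub>v (x - z') \<le> \<gamma> \<cdot>\<^sub>v ones_vec qx}) \<longleftrightarrow>
      (\<forall>r<qx. (Hx *\<^sub>v (a - z')) $ r + Sup ((\<lambda>w. row Hx r \<bullet> w) ` Wx) \<le> \<gamma>)"
  proof -
    have "\<And>wx. wx \<in> Wx \<Longrightarrow> a + wx - z' = (a - z') + wx"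
      using a z' Wx by (intro eq_vecI) auto
    hence "(\<forall>wx\<in>Wx. a + wx \<in> {x \<in> carrier_vec nx. Hx *\<^sub>v (x - z') \<le> \<gamma> \<cdot>\<^sub>v ones_vec qx}) \<longleftrightarrow>
       (\<forall>wx\<in>Wx. (a - z') + wx \<in> carrier_vec nx \<and> Hx *\<^sub>v ((a - z') + wx) \<le> \<gamma> \<cdot>\<^sub>v ones_vec qx)"
    proof (intro ball_cong refl)
      fix wx assume w: "wx \<in> Wx" and e: "\<And>wx. wx \<in> Wx \<Longrightarrow> a + wx - z' = a - z' + wx"
      have wc: "wx \<in> carrier_vec nx" using w Wx by auto
      show "(a + wx \<in> {x \<in> carrier_vec nx. Hx *\<^sub>v (x - z') \<le> \<gamma> \<cdot>\<^sub>v ones_vec qx}) =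
         (a - z' + wx \<in> carrier_vec nx \<and> Hx *\<^sub>v (a - z' + wx) \<le> \<gamma> \<cdot>\<^sub>v ones_vec qx)"
        using e[OF w] a z' wc by simp
    qed
    also have "\<dots> \<longleftrightarrow> (\<forall>r<qx. (Hx *\<^sub>v (a - z')) $ r + Sup ((\<lambda>w. row Hx r \<bullet> w) ` Wx) \<le> \<gamma>)"
      by (rule one_part[OF Hx amz Wx])
    finally show ?thesis .
  qed
  have P2: "(\<forall>wy\<in>Wy. b + wy \<in> {y \<in> carrier_vec nY. Fp *\<^sub>v y \<le> ones_vec mF}) \<longleftrightarrow>
      (\<forall>r<mF. (Fp *\<^sub>v b) $ r + Sup ((\<lambda>w. row Fp r \<bullet> w) ` Wy) \<le> 1)"
  proof -
    have "ones_vec mF = 1 \<cdot>\<^sub>v ones_vec mF" by (intro eq_vecI) (auto simp: ones_vec_def)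
    hence "(\<forall>wy\<in>Wy. b + wy \<in> {y \<in> carrier_vec nY. Fp *\<^sub>v y \<le> ones_vec mF}) \<longleftrightarrow>
       (\<forall>wy\<in>Wy. b + wy \<in> carrier_vec nY \<and> Fp *\<^sub>v (b + wy) \<le> 1 \<cdot>\<^sub>v ones_vec mF)" by auto
    also have "\<dots> \<longleftrightarrow> (\<forall>r<mF. (Fp *\<^sub>v b) $ r + Sup ((\<lambda>w. row Fp r \<bullet> w) ` Wy) \<le> 1)"
      by (rule one_part[OF Fp b Wy])
    finally show ?thesis .
  qed
  have HP: "diag_block_mat [Hx, Fp] *\<^sub>v ((a - z') @\<^sub>v b) = (Hx *\<^sub>v (a - z')) @\<^sub>v (Fp *\<^sub>v b)"
    by (rule Hp_mult[OF Hx Fp amz b])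
  have R1: "\<And>r. r < qx \<Longrightarrow> (diag_block_mat [Hx, Fp] *\<^sub>v ((a - z') @\<^sub>v b)) $ r = (Hx *\<^sub>v (a - z')) $ r"
    unfolding HP using Hx Fp by simp
  have R2: "\<And>r. r < mF \<Longrightarrow> (diag_block_mat [Hx, Fp] *\<^sub>v ((a - z') @\<^sub>v b)) $ (qx + r) = (Fp *\<^sub>v b) $ r"
    unfolding HP using Hx Fp by simp
  have dr: "dim_vec (row_max Hx Wx) = qx" "dim_vec (row_max Fp Wy) = mF"
    using Hx Fp unfolding row_max_def by auto
  have B1: "\<And>r. r < qx \<Longrightarrow> (((\<gamma> \<cdot>\<^sub>v ones_vec qx) @\<^sub>v ones_vec mF) - (row_max Hx Wx @\<^sub>v row_max Fp Wy)) $ r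
      = \<gamma> - Sup ((\<lambda>w. row Hx r \<bullet> w) ` Wx)"
    using dr Hx by (simp add: ones_vec_def row_max_def)
  have B2: "\<And>r. r < mF \<Longrightarrow> (((\<gamma> \<cdot>\<^sub>v ones_vec qx) @\<^sub>v ones_vec mF) - (row_max Hx Wx @\<^sub>v row_max Fp Wy)) $ (qx + r)
      = 1 - Sup ((\<lambda>w. row Fp r \<bullet> w) ` Wy)"
    using dr Fp by (simp add: ones_vec_def row_max_def)
  define P where "P = (\<lambda>r. (diag_block_mat [Hx, Fp] *\<^sub>v ((a - z') @\<^sub>v b)) $ r \<le>
          (((\<gamma> \<cdot>\<^sub>v ones_vec qx) @\<^sub>v ones_vec mF) - (row_max Hx Wx @\<^sub>v row_max Fp Wy)) $ r)"
  have Q1: "(\<forall>r<qx. P r) \<longleftrightarrow> (\<forall>r<qx. (Hx *\<^sub>v (a - z')) $ r + Sup ((\<lambda>w. row Hx r \<bullet> w) ` Wx) \<le> \<gamma>)"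
    unfolding P_def by (simp add: R1 B1 le_diff_eq)
  have Q2: "(\<forall>r<mF. P (qx + r)) \<longleftrightarrow> (\<forall>r<mF. (Fp *\<^sub>v b) $ r + Sup ((\<lambda>w. row Fp r \<bullet> w) ` Wy) \<le> 1)"
    unfolding P_def by (simp add: R2 B2 le_diff_eq)
  have "(\<forall>r<qx + mF. P r) \<longleftrightarrow> (\<forall>r<qx. P r) \<and> (\<forall>r<mF. P (qx + r))" by (rule ball_less_add)
  thus ?thesis unfolding P1 P2 Q1[symmetric] Q2[symmetric] unfolding P_def by (rule sym)
qed



lemma KI_gen:
  fixes P Q :: "nat \<Rightarrow> real mat"
  assumes P: "\<And>i. i \<le> np \<Longrightarrow> P i \<in> carrier_mat m nx" and Q: "\<And>i. i \<le> np \<Longrightarrow> Q i \<in> carrier_mat m N"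
    and X: "X \<in> carrier_vec nx" and U: "U \<in> carrier_vec N" and r: "r < m"
  shows "(aff_mat np P \<theta> *\<^sub>v X + aff_mat np Q \<theta> *\<^sub>v U) $ r
     = (P 0 *\<^sub>v X + Q 0 *\<^sub>v U) $ r + (\<Sum>c<np. (P (c+1) *\<^sub>v X + Q (c+1) *\<^sub>v U) $ r * \<theta> $ c)"
proof -
  have P0: "P 0 \<in> carrier_mat m nx" and Q0: "Q 0 \<in> carrier_mat m N" using P Q by auto
  have "(aff_mat np P \<theta> *\<^sub>v X + aff_mat np Q \<theta> *\<^sub>v U) $ r
      = (aff_mat np P \<theta> *\<^sub>v X) $ r + (aff_mat np Q \<theta> *\<^sub>v U) $ r"
    using aff_mat_carrier[of P m nx np \<theta>, OF P0] aff_mat_carrier[of Q m N np \<theta>, OF Q0] r by simp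
  also have "\<dots> = (P 0 *\<^sub>v X) $ r + (\<Sum>c<np. \<theta> $ c * (P (c+1) *\<^sub>v X) $ r)
               + ((Q 0 *\<^sub>v U) $ r + (\<Sum>c<np. \<theta> $ c * (Q (c+1) *\<^sub>v U) $ r))"
    using aff_mat_mult[OF P X r] aff_mat_mult[OF Q U r] by simp
  also have "\<dots> = (P 0 *\<^sub>v X + Q 0 *\<^sub>v U) $ r + (\<Sum>c<np. (P (c+1) *\<^sub>v X + Q (c+1) *\<^sub>v U) $ r * \<theta> $ c)"
  proof -
    have "(\<Sum>c<np. (P (c+1) *\<^sub>v X + Q (c+1) *\<^sub>v U) $ r * \<theta> $ c)
        = (\<Sum>c<np. \<theta> $ c * (P (c+1) *\<^sub>v X) $ r + \<theta> $ c * (Q (c+1) *\<^sub>v U) $ r)"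
    proof (rule sum.cong)
      fix c assume "c \<in> {..<np}"
      hence c: "c + 1 \<le> np" by auto
      show "(P (c+1) *\<^sub>v X + Q (c+1) *\<^sub>v U) $ r * \<theta> $ c = \<theta> $ c * (P (c+1) *\<^sub>v X) $ r + \<theta> $ c * (Q (c+1) *\<^sub>v U) $ r"
        using P[OF c] Q[OF c] r by (simp add: algebra_simps)
    qed simp
    moreover have "(P 0 *\<^sub>v X + Q 0 *\<^sub>v U) $ r = (P 0 *\<^sub>v X) $ r + (Q 0 *\<^sub>v U) $ r" using P0 Q0 r by simp
    ultimately show ?thesis by (simp add: sum.distrib)
  qed
  finally show ?thesis .
qed

lemma KI:
  fixes Ab Bb Cb Db :: "nat \<Rightarrow> real mat"
  assumes Ab: "\<And>i. i \<le> np \<Longrightarrow> Ab i \<in> carrier_mat nx nx"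
    and Bb: "\<And>i. i \<le> np \<Longrightarrow> Bb i \<in> carrier_mat nx NU"
    and Cb: "\<And>i. i \<le> np \<Longrightarrow> Cb i \<in> carrier_mat NY nx"
    and Db: "\<And>i. i \<le> np \<Longrightarrow> Db i \<in> carrier_mat NY NU"
    and X: "X \<in> carrier_vec nx" and U: "U \<in> carrier_vec NU" and z': "z' \<in> carrier_vec nx"
    and th: "\<theta> \<in> carrier_vec np"
  shows "(aff_mat np Ab \<theta> *\<^sub>v X + aff_mat np Bb \<theta> *\<^sub>v U - z') @\<^sub>v (aff_mat np Cb \<theta> *\<^sub>v X + aff_mat np Db \<theta> *\<^sub>v U)
   = ((Ab 0 *\<^sub>v X + Bb 0 *\<^sub>v U - z') @\<^sub>v (Cb 0 *\<^sub>v X + Db 0 *\<^sub>v U)) +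
     mat (nx + NY) np (\<lambda>(r, c). ((Ab (c+1) *\<^sub>v X + Bb (c+1) *\<^sub>v U) @\<^sub>v (Cb (c+1) *\<^sub>v X + Db (c+1) *\<^sub>v U)) $ r) *\<^sub>v \<theta>"
  (is "?L = ?e + ?E *\<^sub>v \<theta>")
proof -
  have A0: "Ab 0 \<in> carrier_mat nx nx" "Bb 0 \<in> carrier_mat nx NU" "Cb 0 \<in> carrier_mat NY nx" "Db 0 \<in> carrier_mat NY NU"
    using Ab Bb Cb Db by auto
  have Ec: "?E \<in> carrier_mat (nx + NY) np" by auto
  have dL: "dim_vec ?L = nx + NY"
    using aff_mat_carrier[of Ab nx nx np \<theta>] aff_mat_carrier[of Cb NY nx np \<theta>]
      aff_mat_carrier[of Bb nx NU np \<theta>] aff_mat_carrier[of Db NY NU np \<theta>] A0 z' by simp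
  have de: "dim_vec ?e = nx + NY" using A0 z' by simp
  show ?thesis
  proof (rule eq_vecI)
    show "dim_vec ?L = dim_vec (?e + ?E *\<^sub>v \<theta>)" using dL de Ec by simp
    fix r assume "r < dim_vec (?e + ?E *\<^sub>v \<theta>)"
    hence r: "r < nx + NY" using Ec by simp
    have Eth: "(?E *\<^sub>v \<theta>) $ r = (\<Sum>c<np. ?E $$ (r, c) * \<theta> $ c)" using mv_idx[OF Ec th r] .
    have Eent: "\<And>c. c < np \<Longrightarrow> ?E $$ (r, c) = (if r < nx then (Ab (c+1) *\<^sub>v X + Bb (c+1) *\<^sub>v U) $ r
                  else (Cb (c+1) *\<^sub>v X + Db (c+1) *\<^sub>v U) $ (r - nx))"
    proof -
      fix c assume c: "c < np"
      hence c': "c + 1 \<le> np" by auto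
      show "?E $$ (r, c) = (if r < nx then (Ab (c+1) *\<^sub>v X + Bb (c+1) *\<^sub>v U) $ r
                  else (Cb (c+1) *\<^sub>v X + Db (c+1) *\<^sub>v U) $ (r - nx))"
        using r c Ab[OF c'] Bb[OF c'] Cb[OF c'] Db[OF c'] by simp
    qed
    show "?L $ r = (?e + ?E *\<^sub>v \<theta>) $ r"
    proof (cases "r < nx")
      case True
      have "?L $ r = (aff_mat np Ab \<theta> *\<^sub>v X + aff_mat np Bb \<theta> *\<^sub>v U) $ r - z' $ r"
        using True aff_mat_carrier[of Ab nx nx np \<theta>] aff_mat_carrier[of Bb nx NU np \<theta>]
          aff_mat_carrier[of Cb NY nx np \<theta>] aff_mat_carrier[of Db NY NU np \<theta>] A0 z' by simp
      also have "\<dots> = (Ab 0 *\<^sub>v X + Bb 0 *\<^sub>v U) $ r - z' $ r + (\<Sum>c<np. (Ab (c+1) *\<^sub>v X + Bb (c+1) *\<^sub>v U) $ r * \<theta> $ c)"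
        using KI_gen[OF Ab Bb X U True] by simp
      also have "(\<Sum>c<np. (Ab (c+1) *\<^sub>v X + Bb (c+1) *\<^sub>v U) $ r * \<theta> $ c) = (?E *\<^sub>v \<theta>) $ r"
        unfolding Eth using Eent True by (intro sum.cong) auto
      also have "(Ab 0 *\<^sub>v X + Bb 0 *\<^sub>v U) $ r - z' $ r = ?e $ r" using True A0 z' by simp
      finally show ?thesis using r de Ec by simp
    next
      case False
      hence r': "r - nx < NY" using r by auto
      have "?L $ r = (aff_mat np Cb \<theta> *\<^sub>v X + aff_mat np Db \<theta> *\<^sub>v U) $ (r - nx)"
        using False r aff_mat_carrier[of Ab nx nx np \<theta>] aff_mat_carrier[of Bb nx NU np \<theta>]
          aff_mat_carrier[of Cb NY nx np \<theta>] aff_mat_carrier[of Db NY NU np \<theta>] A0 z' by simp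
      also have "\<dots> = (Cb 0 *\<^sub>v X + Db 0 *\<^sub>v U) $ (r - nx) + (\<Sum>c<np. (Cb (c+1) *\<^sub>v X + Db (c+1) *\<^sub>v U) $ (r - nx) * \<theta> $ c)"
        using KI_gen[OF Cb Db X U r'] by simp
      also have "(\<Sum>c<np. (Cb (c+1) *\<^sub>v X + Db (c+1) *\<^sub>v U) $ (r - nx) * \<theta> $ c) = (?E *\<^sub>v \<theta>) $ r"
        unfolding Eth using Eent False by (intro sum.cong) auto
      also have "(Cb 0 *\<^sub>v X + Db 0 *\<^sub>v U) $ (r - nx) = ?e $ r" using False r A0 z' by simp
      finally show ?thesis using r de Ec by simp
    qed
  qed
qed



theorem proposition1:
  fixes nx nu np p Np cx cu qx q\<theta> :: nat
    and F G Hx H\<theta> K :: "real mat" and h\<theta> :: "real vec"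
    and Ab Bb Cb Db :: "nat \<Rightarrow> real mat"
    and Wx Wy :: "real vec set"
    and xs :: "real vec list"
    and z :: "nat \<Rightarrow> real vec" and \<alpha> :: "nat \<Rightarrow> real" and V :: "nat \<Rightarrow> real vec"
    and Xj :: "real vec"
  defines "XX \<equiv> {x \<in> carrier_vec nx. F *\<^sub>v x \<le> ones_vec cx}"
      and "UU \<equiv> {u \<in> carrier_vec nu. G *\<^sub>v u \<le> ones_vec cu}"
      and "\<Theta> \<equiv> {\<theta> \<in> carrier_vec np. H\<theta> *\<^sub>v \<theta> \<le> h\<theta>}"
      and "X0 \<equiv> {x \<in> carrier_vec nx. Hx *\<^sub>v x \<le> ones_vec qx}"
      and "Fp \<equiv> diag_block_mat (replicate (p - 1) F)"
      and "Gp \<equiv> diag_block_mat (replicate p G)"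
      and "Hp \<equiv> diag_block_mat [Hx, diag_block_mat (replicate (p - 1) F)]"
      and "A \<equiv> aff_mat np Ab" and "B \<equiv> aff_mat np Bb"
      and "C \<equiv> aff_mat np Cb" and "D \<equiv> aff_mat np Db"
      and "Xpm1 \<equiv> {y \<in> carrier_vec ((p - 1) * nx). (diag_block_mat (replicate (p - 1) F)) *\<^sub>v y \<le> ones_vec (cx * (p - 1))}"
      and "Up \<equiv> {u \<in> carrier_vec (p * nu). (diag_block_mat (replicate p G)) *\<^sub>v u \<le> ones_vec (cu * p)}"
      and "fbar \<equiv> row_max F {x \<in> carrier_vec nx. Hx *\<^sub>v x \<le> ones_vec qx}"
      and "gbar \<equiv> row_max (diag_block_mat (replicate p G) * K) {x \<in> carrier_vec nx. Hx *\<^sub>v x \<le> ones_vec qx}"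
      and "wbar \<equiv> row_max Hx Wx @\<^sub>v row_max (diag_block_mat (replicate (p - 1) F)) Wy"
      and "Tube \<equiv> (\<lambda>l. {x \<in> carrier_vec nx. Hx *\<^sub>v (x - z l) \<le> \<alpha> l \<cdot>\<^sub>v ones_vec qx})"
      and "Upol \<equiv> (\<lambda>l X. K *\<^sub>v X + V l)"
      and "Phi \<equiv> (\<lambda>l. (\<alpha> l \<cdot>\<^sub>v ones_vec qx) @\<^sub>v ones_vec (cx * (p - 1)))"
      and "Ev \<equiv> (\<lambda>v l. let Xv = z l + \<alpha> l \<cdot>\<^sub>v (xs ! v); Uv = V l + K *\<^sub>v Xv in
              mat (nx + (p - 1) * nx) np (\<lambda>(r, c).
                ((Ab (c + 1) *\<^sub>v Xv + Bb (c + 1) *\<^sub>v Uv)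
                 @\<^sub>v (Cb (c + 1) *\<^sub>v Xv + Db (c + 1) *\<^sub>v Uv)) $ r))"
      and "ev \<equiv> (\<lambda>v l. let Xv = z l + \<alpha> l \<cdot>\<^sub>v (xs ! v); Uv = V l + K *\<^sub>v Xv in
              (Ab 0 *\<^sub>v Xv + Bb 0 *\<^sub>v Uv - z (l + 1))
               @\<^sub>v (Cb 0 *\<^sub>v Xv + Db 0 *\<^sub>v Uv))"
  assumes p_ge: "p \<ge> 1" and Np_ge: "Np \<ge> 1"
    and F_dim: "F \<in> carrier_mat cx nx" and G_dim: "G \<in> carrier_mat cu nu"
    and XX_bdd: "bounded_vset XX" and UU_bdd: "bounded_vset UU"
    and Ab_dim: "\<And>i. i \<le> np \<Longrightarrow> Ab i \<in> carrier_mat nx nx"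
    and Bb_dim: "\<And>i. i \<le> np \<Longrightarrow> Bb i \<in> carrier_mat nx (p * nu)"
    and Cb_dim: "\<And>i. i \<le> np \<Longrightarrow> Cb i \<in> carrier_mat ((p - 1) * nx) nx"
    and Db_dim: "\<And>i. i \<le> np \<Longrightarrow> Db i \<in> carrier_mat ((p - 1) * nx) (p * nu)"
    and H\<theta>_dim: "H\<theta> \<in> carrier_mat q\<theta> np" and h\<theta>_dim: "h\<theta> \<in> carrier_vec q\<theta>"
    and \<Theta>_ne: "\<Theta> \<noteq> {}" and \<Theta>_bdd: "bounded_vset \<Theta>"
    and Wx_poly: "is_polytope nx Wx" and Wx_ne: "Wx \<noteq> {}" and Wx_bdd: "bounded_vset Wx"
    and Wy_poly: "is_polytope ((p - 1) * nx) Wy" and Wy_ne: "Wy \<noteq> {}" and Wy_bdd: "bounded_vset Wy"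
    and Hx_dim: "Hx \<in> carrier_mat qx nx" and X0_bdd: "bounded_vset X0"
    and xs_vert: "distinct xs" "set xs = {x. extreme_point X0 x}"
    and K_dim: "K \<in> carrier_mat (p * nu) nx"
    and z_dim: "\<And>l. l \<le> Np \<Longrightarrow> z l \<in> carrier_vec nx"
    and \<alpha>_nonneg: "\<And>l. l \<le> Np \<Longrightarrow> \<alpha> l \<ge> 0"
    and V_dim: "\<And>l. l < Np \<Longrightarrow> V l \<in> carrier_vec (p * nu)"
    and Xj_dim: "Xj \<in> carrier_vec nx"
  shows "(Xj \<in> Tube 0
          \<and> (\<forall>l<Np. \<forall>X\<in>Tube l. \<forall>\<theta>\<in>\<Theta>. \<forall>wx\<in>Wx.
                A \<theta> *\<^sub>v X + B \<theta> *\<^sub>v Upol l X + wx \<in> Tube (l + 1))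
          \<and> (\<forall>l<Np. \<forall>X\<in>Tube l. X \<in> XX \<and> Upol l X \<in> Up)
          \<and> (\<forall>l<Np. \<forall>X\<in>Tube l. \<forall>\<theta>\<in>\<Theta>. \<forall>wy\<in>Wy.
                C \<theta> *\<^sub>v X + D \<theta> *\<^sub>v Upol l X + wy \<in> Xpm1))
         \<longleftrightarrow>
         (\<exists>\<Lambda> :: nat \<Rightarrow> nat \<Rightarrow> real mat.
            (\<forall>v<length xs. \<forall>l<Np.
               \<Lambda> v l \<in> carrier_mat (qx + cx * (p - 1)) q\<theta>
             \<and> (\<forall>r<qx + cx * (p - 1). \<forall>c<q\<theta>. \<Lambda> v l $$ (r, c) \<ge> 0)
             \<and> F *\<^sub>v z l + \<alpha> l \<cdot>\<^sub>v fbar \<le> ones_vec cx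
             \<and> Gp *\<^sub>v (K *\<^sub>v z l) + Gp *\<^sub>v V l + \<alpha> l \<cdot>\<^sub>v gbar \<le> ones_vec (cu * p)
             \<and> Hx *\<^sub>v (Xj - z 0) \<le> \<alpha> 0 \<cdot>\<^sub>v ones_vec qx
             \<and> \<Lambda> v l *\<^sub>v h\<theta> + Hp *\<^sub>v ev v l \<le> Phi (l + 1) - wbar
             \<and> Hp * Ev v l = \<Lambda> v l * H\<theta>))"
proof -
  let ?R = "qx + cx * (p - 1)"
  have Fpc: "Fp \<in> carrier_mat (cx * (p - 1)) ((p - 1) * nx)"
    using carrier_diag_rep[OF F_dim, of "p - 1"] unfolding Fp_def by (simp add: mult.commute)
  have Gpc: "Gp \<in> carrier_mat (cu * p) (p * nu)"
    using carrier_diag_rep[OF G_dim, of p] unfolding Gp_def by (simp add: mult.commute)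
  have Hp_eq: "Hp = diag_block_mat [Hx, Fp]" unfolding Hp_def Fp_def ..
  have Hpc: "Hp \<in> carrier_mat ?R (nx + (p - 1) * nx)"
    using Hx_dim Fpc unfolding Hp_eq carrier_mat_def by (simp add: dim_diag_block_mat)
  have Xpm1_eq: "Xpm1 = {y \<in> carrier_vec ((p - 1) * nx). Fp *\<^sub>v y \<le> ones_vec (cx * (p - 1))}"
    unfolding Xpm1_def Fp_def ..
  have Up_eq: "Up = {u \<in> carrier_vec (p * nu). Gp *\<^sub>v u \<le> ones_vec (cu * p)}"
    unfolding Up_def Gp_def ..
  have fbar_eq: "fbar = row_max F X0" unfolding fbar_def X0_def ..
  have gbar_eq: "gbar = row_max (Gp * K) X0" unfolding gbar_def X0_def Gp_def ..
  have wbar_eq: "wbar = row_max Hx Wx @\<^sub>v row_max Fp Wy" unfolding wbar_def Fp_def ..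
  have X0sub: "X0 \<subseteq> carrier_vec nx" unfolding X0_def by auto
  have X0b: "bounded_vset {x \<in> carrier_vec nx. Hx *\<^sub>v x \<le> ones_vec qx}" using X0_bdd unfolding X0_def .
  have zeroX0: "0\<^sub>v nx \<in> X0" unfolding X0_def using Hx_dim by (auto simp: less_eq_vec_def ones_vec_def)
  have X0ne: "X0 \<noteq> {}" using zeroX0 by auto
  have feas: "\<exists>\<theta>0\<in>carrier_vec np. H\<theta> *\<^sub>v \<theta>0 \<le> h\<theta>" using \<Theta>_ne unfolding \<Theta>_def by auto
  have Wxsub: "Wx \<subseteq> carrier_vec nx" using Wx_poly unfolding is_polytope_def by auto
  have Wysub: "Wy \<subseteq> carrier_vec ((p - 1) * nx)" using Wy_poly unfolding is_polytope_def by auto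
  have tube: "\<And>l X. l \<le> Np \<Longrightarrow> X \<in> Tube l \<longleftrightarrow> (\<exists>x\<in>X0. X = z l + \<alpha> l \<cdot>\<^sub>v x)"
  proof -
    fix l X assume l: "l \<le> Np"
    show "X \<in> Tube l \<longleftrightarrow> (\<exists>x\<in>X0. X = z l + \<alpha> l \<cdot>\<^sub>v x)"
      using tube_char[OF Hx_dim X0b z_dim[OF l] \<alpha>_nonneg[OF l], of X] unfolding Tube_def X0_def by auto
  qed
  have vin: "\<And>v. v < length xs \<Longrightarrow> xs ! v \<in> X0"
    using xs_vert(2) by (metis extreme_point_def mem_Collect_eq nth_mem)
  have vex: "\<And>u. extreme_point X0 u \<Longrightarrow> \<exists>v<length xs. u = xs ! v"
    using xs_vert(2) by (metis in_set_conv_nth mem_Collect_eq)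
  have xs_ne: "xs \<noteq> []"
  proof
    assume xs0: "xs = []"
    have ra: "raff nx (\<lambda>_. 1)" unfolding raff_def by auto
    have "(1::real) \<le> 0"
    proof (rule vertex_reduction[OF Hx_dim X0b ra])
      fix v assume "extreme_point {x \<in> carrier_vec nx. Hx *\<^sub>v x \<le> ones_vec qx} v"
      hence "v \<in> set xs" using xs_vert(2) unfolding X0_def by auto
      thus "(1::real) \<le> 0" using xs0 by auto
    next
      show "0\<^sub>v nx \<in> carrier_vec nx" by auto
      show "Hx *\<^sub>v 0\<^sub>v nx \<le> ones_vec qx" using zeroX0 unfolding X0_def by auto
    qed
    thus False by simp
  qed
  have partA: "\<And>l. l < Np \<Longrightarrow> (\<forall>X\<in>Tube l. X \<in> XX \<and> Upol l X \<in> Up) \<longleftrightarrow>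
      (F *\<^sub>v z l + \<alpha> l \<cdot>\<^sub>v fbar \<le> ones_vec cx \<and> Gp *\<^sub>v (K *\<^sub>v z l) + Gp *\<^sub>v V l + \<alpha> l \<cdot>\<^sub>v gbar \<le> ones_vec (cu * p))"
  proof -
    fix l assume l: "l < Np"
    have zc: "z l \<in> carrier_vec nx" using z_dim l by auto
    have Vc: "V l \<in> carrier_vec (p * nu)" using V_dim l by auto
    have a0: "\<alpha> l \<ge> 0" using \<alpha>_nonneg l by auto
    have GK: "Gp * K \<in> carrier_mat (cu * p) nx" using Gpc K_dim by auto
    have e1: "\<And>x. x \<in> carrier_vec nx \<Longrightarrow> (z l + \<alpha> l \<cdot>\<^sub>v x \<in> XX) \<longleftrightarrow>
        (\<forall>i<cx. (F *\<^sub>v z l) $ i + \<alpha> l * (row F i \<bullet> x) \<le> 1)"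
    proof -
      fix x :: "real vec" assume x: "x \<in> carrier_vec nx"
      have c: "z l + \<alpha> l \<cdot>\<^sub>v x \<in> carrier_vec nx" using zc x by auto
      have "F *\<^sub>v (z l + \<alpha> l \<cdot>\<^sub>v x) \<le> ones_vec cx \<longleftrightarrow> (\<forall>i<cx. (F *\<^sub>v (z l + \<alpha> l \<cdot>\<^sub>v x)) $ i \<le> ones_vec cx $ i)"
        by (rule vec_le_iff) (use F_dim c in \<open>auto simp: ones_vec_def\<close>)
      also have "\<dots> \<longleftrightarrow> (\<forall>i<cx. (F *\<^sub>v z l) $ i + \<alpha> l * (row F i \<bullet> x) \<le> 1)"
        using mv_lin_idx[OF F_dim zc x] F_dim by (simp add: ones_vec_def)
      finally show "(z l + \<alpha> l \<cdot>\<^sub>v x \<in> XX) \<longleftrightarrow> (\<forall>i<cx. (F *\<^sub>v z l) $ i + \<alpha> l * (row F i \<bullet> x) \<le> 1)"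
        unfolding XX_def using c by simp
    qed
    have e2: "\<And>x. x \<in> carrier_vec nx \<Longrightarrow> (Upol l (z l + \<alpha> l \<cdot>\<^sub>v x) \<in> Up) \<longleftrightarrow>
        (\<forall>i<cu * p. (Gp *\<^sub>v (K *\<^sub>v z l)) $ i + (Gp *\<^sub>v V l) $ i + \<alpha> l * (row (Gp * K) i \<bullet> x) \<le> 1)"
    proof -
      fix x :: "real vec" assume x: "x \<in> carrier_vec nx"
      have c: "z l + \<alpha> l \<cdot>\<^sub>v x \<in> carrier_vec nx" using zc x by auto
      have w: "K *\<^sub>v (z l + \<alpha> l \<cdot>\<^sub>v x) \<in> carrier_vec (p * nu)" using K_dim c by auto
      have uc: "Upol l (z l + \<alpha> l \<cdot>\<^sub>v x) \<in> carrier_vec (p * nu)" unfolding Upol_def using w Vc by auto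
      have ent: "\<And>i. i < cu * p \<Longrightarrow> (Gp *\<^sub>v Upol l (z l + \<alpha> l \<cdot>\<^sub>v x)) $ i =
          (Gp *\<^sub>v (K *\<^sub>v z l)) $ i + (Gp *\<^sub>v V l) $ i + \<alpha> l * (row (Gp * K) i \<bullet> x)"
      proof -
        fix i assume i: "i < cu * p"
        have "Gp *\<^sub>v Upol l (z l + \<alpha> l \<cdot>\<^sub>v x) = Gp *\<^sub>v (K *\<^sub>v (z l + \<alpha> l \<cdot>\<^sub>v x)) + Gp *\<^sub>v V l"
          unfolding Upol_def using Gpc w Vc by (simp add: mult_add_distrib_mat_vec[of Gp "cu * p" "p * nu"])
        also have "Gp *\<^sub>v (K *\<^sub>v (z l + \<alpha> l \<cdot>\<^sub>v x)) = (Gp * K) *\<^sub>v (z l + \<alpha> l \<cdot>\<^sub>v x)"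
          using Gpc K_dim c by simp
        finally have "(Gp *\<^sub>v Upol l (z l + \<alpha> l \<cdot>\<^sub>v x)) $ i = ((Gp * K) *\<^sub>v (z l + \<alpha> l \<cdot>\<^sub>v x)) $ i + (Gp *\<^sub>v V l) $ i"
          using i GK Gpc by simp
        also have "((Gp * K) *\<^sub>v (z l + \<alpha> l \<cdot>\<^sub>v x)) $ i = ((Gp * K) *\<^sub>v z l) $ i + \<alpha> l * ((Gp * K) *\<^sub>v x) $ i"
          by (rule mv_lin_idx[OF GK zc x i])
        also have "(Gp * K) *\<^sub>v z l = Gp *\<^sub>v (K *\<^sub>v z l)" using Gpc K_dim zc by simp
        also have "((Gp * K) *\<^sub>v x) $ i = row (Gp * K) i \<bullet> x"
          by (rule index_mult_mat_vec) (use GK i in auto)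
        finally show "(Gp *\<^sub>v Upol l (z l + \<alpha> l \<cdot>\<^sub>v x)) $ i =
          (Gp *\<^sub>v (K *\<^sub>v z l)) $ i + (Gp *\<^sub>v V l) $ i + \<alpha> l * (row (Gp * K) i \<bullet> x)" by simp
      qed
      have "Gp *\<^sub>v Upol l (z l + \<alpha> l \<cdot>\<^sub>v x) \<le> ones_vec (cu * p) \<longleftrightarrow>
          (\<forall>i<cu * p. (Gp *\<^sub>v Upol l (z l + \<alpha> l \<cdot>\<^sub>v x)) $ i \<le> ones_vec (cu * p) $ i)"
        by (rule vec_le_iff) (use Gpc uc in \<open>auto simp: ones_vec_def\<close>)
      also have "\<dots> \<longleftrightarrow> (\<forall>i<cu * p. (Gp *\<^sub>v (K *\<^sub>v z l)) $ i + (Gp *\<^sub>v V l) $ i + \<alpha> l * (row (Gp * K) i \<bullet> x) \<le> 1)"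
        using ent by (simp add: ones_vec_def)
      finally show "(Upol l (z l + \<alpha> l \<cdot>\<^sub>v x) \<in> Up) \<longleftrightarrow>
        (\<forall>i<cu * p. (Gp *\<^sub>v (K *\<^sub>v z l)) $ i + (Gp *\<^sub>v V l) $ i + \<alpha> l * (row (Gp * K) i \<bullet> x) \<le> 1)"
        unfolding Up_eq using uc by simp
    qed
    have "(\<forall>X\<in>Tube l. X \<in> XX \<and> Upol l X \<in> Up) \<longleftrightarrow>
          (\<forall>x\<in>X0. z l + \<alpha> l \<cdot>\<^sub>v x \<in> XX \<and> Upol l (z l + \<alpha> l \<cdot>\<^sub>v x) \<in> Up)"
      using tube[of l] l by auto
    also have "\<dots> \<longleftrightarrow> (\<forall>x\<in>X0. (\<forall>i<cx. (F *\<^sub>v z l) $ i + \<alpha> l * (row F i \<bullet> x) \<le> 1) \<and>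
        (\<forall>i<cu * p. (Gp *\<^sub>v (K *\<^sub>v z l)) $ i + (Gp *\<^sub>v V l) $ i + \<alpha> l * (row (Gp * K) i \<bullet> x) \<le> 1))"
      using e1 e2 X0sub by blast
    also have "\<dots> \<longleftrightarrow> (\<forall>i<cx. \<forall>x\<in>X0. (F *\<^sub>v z l) $ i + \<alpha> l * (row F i \<bullet> x) \<le> 1) \<and>
        (\<forall>i<cu * p. \<forall>x\<in>X0. (Gp *\<^sub>v (K *\<^sub>v z l)) $ i + (Gp *\<^sub>v V l) $ i + \<alpha> l * (row (Gp * K) i \<bullet> x) \<le> 1)"
      by blast
    also have "\<dots> \<longleftrightarrow> (\<forall>i<cx. (F *\<^sub>v z l) $ i + \<alpha> l * fbar $ i \<le> 1) \<and>
        (\<forall>i<cu * p. (Gp *\<^sub>v (K *\<^sub>v z l)) $ i + (Gp *\<^sub>v V l) $ i + \<alpha> l * gbar $ i \<le> 1)"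
      using sup_aff[OF X0sub X0_bdd X0ne a0] F_dim GK Gpc unfolding fbar_eq gbar_eq row_max_def by simp
    also have "\<dots> \<longleftrightarrow> (F *\<^sub>v z l + \<alpha> l \<cdot>\<^sub>v fbar \<le> ones_vec cx \<and> Gp *\<^sub>v (K *\<^sub>v z l) + Gp *\<^sub>v V l + \<alpha> l \<cdot>\<^sub>v gbar \<le> ones_vec (cu * p))"
    proof -
      have fc: "fbar \<in> carrier_vec cx" unfolding fbar_eq row_max_def using F_dim by auto
      have gc: "gbar \<in> carrier_vec (cu * p)" unfolding gbar_eq row_max_def using GK by auto
      have c1: "F *\<^sub>v z l + \<alpha> l \<cdot>\<^sub>v fbar \<in> carrier_vec cx" using F_dim zc fc by auto
      have c2: "Gp *\<^sub>v (K *\<^sub>v z l) + Gp *\<^sub>v V l + \<alpha> l \<cdot>\<^sub>v gbar \<in> carrier_vec (cu * p)"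
        using Gpc K_dim zc Vc gc by auto
      have o1: "ones_vec cx \<in> carrier_vec cx" and o2: "ones_vec (cu * p) \<in> carrier_vec (cu * p)"
        by (auto simp: ones_vec_def)
      show ?thesis unfolding vec_le_iff[OF c1 o1] vec_le_iff[OF c2 o2]
        using F_dim zc fc Gpc K_dim Vc gc by (simp add: ones_vec_def)
    qed
    finally show "(\<forall>X\<in>Tube l. X \<in> XX \<and> Upol l X \<in> Up) \<longleftrightarrow>
      (F *\<^sub>v z l + \<alpha> l \<cdot>\<^sub>v fbar \<le> ones_vec cx \<and> Gp *\<^sub>v (K *\<^sub>v z l) + Gp *\<^sub>v V l + \<alpha> l \<cdot>\<^sub>v gbar \<le> ones_vec (cu * p))" .
  qed
  define Y where "Y = (\<lambda>l \<theta> X. (A \<theta> *\<^sub>v X + B \<theta> *\<^sub>v Upol l X - z (l + 1)) @\<^sub>v (C \<theta> *\<^sub>v X + D \<theta> *\<^sub>v Upol l X))"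
  define \<beta> where "\<beta> = (\<lambda>l. Phi (l + 1) - wbar)"
  have Ac: "\<And>\<theta>. A \<theta> \<in> carrier_mat nx nx" unfolding A_def by (rule aff_mat_carrier) (use Ab_dim in auto)
  have Bc: "\<And>\<theta>. B \<theta> \<in> carrier_mat nx (p * nu)" unfolding B_def by (rule aff_mat_carrier) (use Bb_dim in auto)
  have Cc: "\<And>\<theta>. C \<theta> \<in> carrier_mat ((p - 1) * nx) nx" unfolding C_def by (rule aff_mat_carrier) (use Cb_dim in auto)
  have Dc: "\<And>\<theta>. D \<theta> \<in> carrier_mat ((p - 1) * nx) (p * nu)" unfolding D_def by (rule aff_mat_carrier) (use Db_dim in auto)
  have Uc: "\<And>l X. l < Np \<Longrightarrow> X \<in> carrier_vec nx \<Longrightarrow> Upol l X \<in> carrier_vec (p * nu)"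
    unfolding Upol_def using K_dim V_dim by auto
  have Tc: "\<And>l X. X \<in> Tube l \<Longrightarrow> X \<in> carrier_vec nx" unfolding Tube_def by auto
  have Thc: "\<And>\<theta>. \<theta> \<in> \<Theta> \<Longrightarrow> \<theta> \<in> carrier_vec np" unfolding \<Theta>_def by auto
  have partB: "\<And>l. l < Np \<Longrightarrow> ((\<forall>X\<in>Tube l. \<forall>\<theta>\<in>\<Theta>. \<forall>wx\<in>Wx. A \<theta> *\<^sub>v X + B \<theta> *\<^sub>v Upol l X + wx \<in> Tube (l + 1))
      \<and> (\<forall>X\<in>Tube l. \<forall>\<theta>\<in>\<Theta>. \<forall>wy\<in>Wy. C \<theta> *\<^sub>v X + D \<theta> *\<^sub>v Upol l X + wy \<in> Xpm1)) \<longleftrightarrow>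
      (\<forall>X\<in>Tube l. \<forall>\<theta>\<in>\<Theta>. \<forall>r<?R. (Hp *\<^sub>v Y l \<theta> X) $ r \<le> \<beta> l $ r)"
  proof -
    fix l assume l: "l < Np"
    have per: "\<And>X \<theta>. X \<in> Tube l \<Longrightarrow> \<theta> \<in> \<Theta> \<Longrightarrow>
       ((\<forall>wx\<in>Wx. A \<theta> *\<^sub>v X + B \<theta> *\<^sub>v Upol l X + wx \<in> Tube (l + 1))
      \<and> (\<forall>wy\<in>Wy. C \<theta> *\<^sub>v X + D \<theta> *\<^sub>v Upol l X + wy \<in> Xpm1)) \<longleftrightarrow>
      (\<forall>r<?R. (Hp *\<^sub>v Y l \<theta> X) $ r \<le> \<beta> l $ r)"
    proof -
      fix X \<theta> :: "real vec" assume X: "X \<in> Tube l" and th: "\<theta> \<in> \<Theta>"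
      have Xc: "X \<in> carrier_vec nx" using Tc[OF X] .
      have U: "Upol l X \<in> carrier_vec (p * nu)" using Uc[OF l Xc] .
      have a: "A \<theta> *\<^sub>v X + B \<theta> *\<^sub>v Upol l X \<in> carrier_vec nx" using Ac[of \<theta>] Bc[of \<theta>] Xc U by (meson add_carrier_vec mult_mat_vec_carrier)
      have b: "C \<theta> *\<^sub>v X + D \<theta> *\<^sub>v Upol l X \<in> carrier_vec ((p - 1) * nx)" using Cc[of \<theta>] Dc[of \<theta>] Xc U by (meson add_carrier_vec mult_mat_vec_carrier)
      have z': "z (l + 1) \<in> carrier_vec nx" using z_dim l by auto
      have Tube1: "Tube (l + 1) = {x \<in> carrier_vec nx. Hx *\<^sub>v (x - z (l + 1)) \<le> \<alpha> (l + 1) \<cdot>\<^sub>v ones_vec qx}"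
        unfolding Tube_def ..
      show "((\<forall>wx\<in>Wx. A \<theta> *\<^sub>v X + B \<theta> *\<^sub>v Upol l X + wx \<in> Tube (l + 1))
      \<and> (\<forall>wy\<in>Wy. C \<theta> *\<^sub>v X + D \<theta> *\<^sub>v Upol l X + wy \<in> Xpm1)) \<longleftrightarrow>
      (\<forall>r<?R. (Hp *\<^sub>v Y l \<theta> X) $ r \<le> \<beta> l $ r)"
        unfolding Tube1 Xpm1_eq Y_def \<beta>_def Phi_def wbar_eq Hp_eq
        by (rule split_cond[OF Hx_dim Fpc a z' b Wxsub Wx_ne Wx_bdd Wysub Wy_ne Wy_bdd])
    qed
    have "((\<forall>X\<in>Tube l. \<forall>\<theta>\<in>\<Theta>. \<forall>wx\<in>Wx. A \<theta> *\<^sub>v X + B \<theta> *\<^sub>v Upol l X + wx \<in> Tube (l + 1))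
      \<and> (\<forall>X\<in>Tube l. \<forall>\<theta>\<in>\<Theta>. \<forall>wy\<in>Wy. C \<theta> *\<^sub>v X + D \<theta> *\<^sub>v Upol l X + wy \<in> Xpm1)) \<longleftrightarrow>
      (\<forall>X\<in>Tube l. \<forall>\<theta>\<in>\<Theta>. (\<forall>wx\<in>Wx. A \<theta> *\<^sub>v X + B \<theta> *\<^sub>v Upol l X + wx \<in> Tube (l + 1))
      \<and> (\<forall>wy\<in>Wy. C \<theta> *\<^sub>v X + D \<theta> *\<^sub>v Upol l X + wy \<in> Xpm1))" by blast
    also have "\<dots> \<longleftrightarrow> (\<forall>X\<in>Tube l. \<forall>\<theta>\<in>\<Theta>. \<forall>r<?R. (Hp *\<^sub>v Y l \<theta> X) $ r \<le> \<beta> l $ r)"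
      using per by (intro ball_cong refl) blast
    finally show "((\<forall>X\<in>Tube l. \<forall>\<theta>\<in>\<Theta>. \<forall>wx\<in>Wx. A \<theta> *\<^sub>v X + B \<theta> *\<^sub>v Upol l X + wx \<in> Tube (l + 1))
      \<and> (\<forall>X\<in>Tube l. \<forall>\<theta>\<in>\<Theta>. \<forall>wy\<in>Wy. C \<theta> *\<^sub>v X + D \<theta> *\<^sub>v Upol l X + wy \<in> Xpm1)) \<longleftrightarrow>
      (\<forall>X\<in>Tube l. \<forall>\<theta>\<in>\<Theta>. \<forall>r<?R. (Hp *\<^sub>v Y l \<theta> X) $ r \<le> \<beta> l $ r)" .
  qed
  have evc: "\<And>v l. l < Np \<Longrightarrow> ev v l \<in> carrier_vec (nx + (p - 1) * nx)"
  proof -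
    fix v l :: nat assume l: "l < Np"
    have zz: "dim_vec (z (l + 1)) = nx" using z_dim[of "l + 1"] l by auto
    have "Ab 0 \<in> carrier_mat nx nx" "Bb 0 \<in> carrier_mat nx (p * nu)" "Cb 0 \<in> carrier_mat ((p - 1) * nx) nx"
      "Db 0 \<in> carrier_mat ((p - 1) * nx) (p * nu)" using Ab_dim Bb_dim Cb_dim Db_dim by auto
    hence d: "dim_row (Ab 0) = nx" "dim_row (Bb 0) = nx" "dim_row (Cb 0) = (p - 1) * nx" "dim_row (Db 0) = (p - 1) * nx"
      by auto
    show "ev v l \<in> carrier_vec (nx + (p - 1) * nx)" unfolding ev_def Let_def carrier_vec_def using d zz by simp
  qed
  have Evc: "\<And>v l. Ev v l \<in> carrier_mat (nx + (p - 1) * nx) np" unfolding Ev_def Let_def by auto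
  have KIv: "\<And>l v \<theta>. l < Np \<Longrightarrow> v < length xs \<Longrightarrow> \<theta> \<in> carrier_vec np \<Longrightarrow>
      Y l \<theta> (z l + \<alpha> l \<cdot>\<^sub>v xs ! v) = ev v l + Ev v l *\<^sub>v \<theta>"
  proof -
    fix l v :: nat and \<theta> :: "real vec" assume l: "l < Np" and v: "v < length xs" and th: "\<theta> \<in> carrier_vec np"
    have xv: "xs ! v \<in> carrier_vec nx" using vin[OF v] X0sub by auto
    have Xvc: "z l + \<alpha> l \<cdot>\<^sub>v xs ! v \<in> carrier_vec nx" using xv z_dim l by auto
    have Vc: "V l \<in> carrier_vec (p * nu)" using V_dim l by auto
    have KX: "K *\<^sub>v (z l + \<alpha> l \<cdot>\<^sub>v xs ! v) \<in> carrier_vec (p * nu)" using K_dim Xvc by auto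
    have Uvc: "V l + K *\<^sub>v (z l + \<alpha> l \<cdot>\<^sub>v xs ! v) \<in> carrier_vec (p * nu)" using KX Vc by auto
    have eqU: "Upol l (z l + \<alpha> l \<cdot>\<^sub>v xs ! v) = V l + K *\<^sub>v (z l + \<alpha> l \<cdot>\<^sub>v xs ! v)"
      unfolding Upol_def using comm_add_vec[OF KX Vc] .
    have z': "z (l + 1) \<in> carrier_vec nx" using z_dim l by auto
    have "Y l \<theta> (z l + \<alpha> l \<cdot>\<^sub>v xs ! v) =
      (aff_mat np Ab \<theta> *\<^sub>v (z l + \<alpha> l \<cdot>\<^sub>v xs ! v) + aff_mat np Bb \<theta> *\<^sub>v (V l + K *\<^sub>v (z l + \<alpha> l \<cdot>\<^sub>v xs ! v)) - z (l + 1))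
      @\<^sub>v (aff_mat np Cb \<theta> *\<^sub>v (z l + \<alpha> l \<cdot>\<^sub>v xs ! v) + aff_mat np Db \<theta> *\<^sub>v (V l + K *\<^sub>v (z l + \<alpha> l \<cdot>\<^sub>v xs ! v)))"
      unfolding Y_def eqU A_def B_def C_def D_def ..
    also have "\<dots> = ev v l + Ev v l *\<^sub>v \<theta>"
      unfolding ev_def Ev_def Let_def
      by (rule KI[OF Ab_dim Bb_dim Cb_dim Db_dim Xvc Uvc z' th])
    finally show "Y l \<theta> (z l + \<alpha> l \<cdot>\<^sub>v xs ! v) = ev v l + Ev v l *\<^sub>v \<theta>" .
  qed
  have HpEv: "\<And>l v \<theta>. l < Np \<Longrightarrow> \<theta> \<in> carrier_vec np \<Longrightarrow> r < ?R \<Longrightarrow>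
      (Hp *\<^sub>v (ev v l + Ev v l *\<^sub>v \<theta>)) $ r = (Hp *\<^sub>v ev v l) $ r + ((Hp * Ev v l) *\<^sub>v \<theta>) $ r" for r
  proof -
    fix l v :: nat and \<theta> :: "real vec" assume l: "l < Np" and th: "\<theta> \<in> carrier_vec np" and r: "r < ?R"
    have "Hp *\<^sub>v (ev v l + Ev v l *\<^sub>v \<theta>) = Hp *\<^sub>v ev v l + Hp *\<^sub>v (Ev v l *\<^sub>v \<theta>)"
      using Hpc evc[OF l, of v] Evc[of v l] th by (simp add: mult_add_distrib_mat_vec[of Hp ?R "nx + (p - 1) * nx"])
    also have "Hp *\<^sub>v (Ev v l *\<^sub>v \<theta>) = (Hp * Ev v l) *\<^sub>v \<theta>" using Hpc Evc[of v l] th by simp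
    finally show "(Hp *\<^sub>v (ev v l + Ev v l *\<^sub>v \<theta>)) $ r = (Hp *\<^sub>v ev v l) $ r + ((Hp * Ev v l) *\<^sub>v \<theta>) $ r"
      using r Hpc Evc[of v l] by simp
  qed
  have partC: "\<And>l. l < Np \<Longrightarrow> (\<forall>X\<in>Tube l. \<forall>\<theta>\<in>\<Theta>. \<forall>r<?R. (Hp *\<^sub>v Y l \<theta> X) $ r \<le> \<beta> l $ r) \<longleftrightarrow>
      (\<forall>v<length xs. \<forall>\<theta>\<in>\<Theta>. \<forall>r<?R. (Hp *\<^sub>v ev v l) $ r + ((Hp * Ev v l) *\<^sub>v \<theta>) $ r \<le> \<beta> l $ r)"
  proof -
    fix l assume l: "l < Np"
    have zc: "z l \<in> carrier_vec nx" using z_dim l by auto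
    have Vc: "V l \<in> carrier_vec (p * nu)" using V_dim l by auto
    have z': "z (l + 1) \<in> carrier_vec nx" using z_dim l by auto
    show "(\<forall>X\<in>Tube l. \<forall>\<theta>\<in>\<Theta>. \<forall>r<?R. (Hp *\<^sub>v Y l \<theta> X) $ r \<le> \<beta> l $ r) \<longleftrightarrow>
      (\<forall>v<length xs. \<forall>\<theta>\<in>\<Theta>. \<forall>r<?R. (Hp *\<^sub>v ev v l) $ r + ((Hp * Ev v l) *\<^sub>v \<theta>) $ r \<le> \<beta> l $ r)"
    proof
      assume H: "\<forall>X\<in>Tube l. \<forall>\<theta>\<in>\<Theta>. \<forall>r<?R. (Hp *\<^sub>v Y l \<theta> X) $ r \<le> \<beta> l $ r"
      show "\<forall>v<length xs. \<forall>\<theta>\<in>\<Theta>. \<forall>r<?R. (Hp *\<^sub>v ev v l) $ r + ((Hp * Ev v l) *\<^sub>v \<theta>) $ r \<le> \<beta> l $ r"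
      proof (intro allI impI ballI)
        fix v r :: nat and \<theta> :: "real vec" assume v: "v < length xs" and th: "\<theta> \<in> \<Theta>" and r: "r < ?R"
        have "z l + \<alpha> l \<cdot>\<^sub>v xs ! v \<in> Tube l" using tube[of l] l vin[OF v] by auto
        hence "(Hp *\<^sub>v Y l \<theta> (z l + \<alpha> l \<cdot>\<^sub>v xs ! v)) $ r \<le> \<beta> l $ r" using H th r by auto
        thus "(Hp *\<^sub>v ev v l) $ r + ((Hp * Ev v l) *\<^sub>v \<theta>) $ r \<le> \<beta> l $ r"
          unfolding KIv[OF l v Thc[OF th]] HpEv[OF l Thc[OF th] r] .
      qed
    next
      assume H: "\<forall>v<length xs. \<forall>\<theta>\<in>\<Theta>. \<forall>r<?R. (Hp *\<^sub>v ev v l) $ r + ((Hp * Ev v l) *\<^sub>v \<theta>) $ r \<le> \<beta> l $ r"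
      show "\<forall>X\<in>Tube l. \<forall>\<theta>\<in>\<Theta>. \<forall>r<?R. (Hp *\<^sub>v Y l \<theta> X) $ r \<le> \<beta> l $ r"
      proof (intro allI impI ballI)
        fix X \<theta> :: "real vec" and r :: nat assume X: "X \<in> Tube l" and th: "\<theta> \<in> \<Theta>" and r: "r < ?R"
        from X obtain x where x: "x \<in> X0" and Xe: "X = z l + \<alpha> l \<cdot>\<^sub>v x" using tube[of l] l by auto
        have vX: "vaff nx nx (\<lambda>x. z l + \<alpha> l \<cdot>\<^sub>v x)"
          by (rule vaff_add[OF vaff_const[OF zc] vaff_smult[OF vaff_id]])
        have vU: "vaff nx (p * nu) (\<lambda>x. Upol l (z l + \<alpha> l \<cdot>\<^sub>v x))"
          unfolding Upol_def by (rule vaff_add[OF vaff_mult[OF K_dim vX] vaff_const[OF Vc]])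
        have vY: "vaff nx (nx + (p - 1) * nx) (\<lambda>x. Y l \<theta> (z l + \<alpha> l \<cdot>\<^sub>v x))"
          unfolding Y_def
          by (rule vaff_append[OF vaff_minus[OF vaff_add[OF vaff_mult[OF Ac vX] vaff_mult[OF Bc vU]] vaff_const[OF z']]
                vaff_add[OF vaff_mult[OF Cc vX] vaff_mult[OF Dc vU]]])
        have ra: "raff nx (\<lambda>x. (Hp *\<^sub>v Y l \<theta> (z l + \<alpha> l \<cdot>\<^sub>v x)) $ r)"
          by (rule raff_idx[OF vaff_mult[OF Hpc vY] r])
        have "(Hp *\<^sub>v Y l \<theta> (z l + \<alpha> l \<cdot>\<^sub>v x)) $ r \<le> \<beta> l $ r"
        proof (rule vertex_reduction[OF Hx_dim X0b ra])
          fix u :: "real vec" assume "extreme_point {x \<in> carrier_vec nx. Hx *\<^sub>v x \<le> ones_vec qx} u"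
          then obtain v where v: "v < length xs" and u: "u = xs ! v" using vex unfolding X0_def by blast
          show "(Hp *\<^sub>v Y l \<theta> (z l + \<alpha> l \<cdot>\<^sub>v u)) $ r \<le> \<beta> l $ r"
            unfolding u KIv[OF l v Thc[OF th]] HpEv[OF l Thc[OF th] r] using H v th r by auto
        next
          show "x \<in> carrier_vec nx" "Hx *\<^sub>v x \<le> ones_vec qx" using x unfolding X0_def by auto
        qed
        thus "(Hp *\<^sub>v Y l \<theta> X) $ r \<le> \<beta> l $ r" unfolding Xe .
      qed
    qed
  qed
  have \<beta>c: "\<And>l. \<beta> l \<in> carrier_vec ?R"
    unfolding \<beta>_def Phi_def wbar_eq row_max_def using Hx_dim Fpc by (auto simp: ones_vec_def)
  have partD: "\<And>l v. l < Np \<Longrightarrow> (\<forall>\<theta>\<in>\<Theta>. \<forall>r<?R. (Hp *\<^sub>v ev v l) $ r + ((Hp * Ev v l) *\<^sub>v \<theta>) $ r \<le> \<beta> l $ r) \<longleftrightarrow>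
      (\<exists>M. M \<in> carrier_mat ?R q\<theta> \<and> (\<forall>r<?R. \<forall>c<q\<theta>. M $$ (r, c) \<ge> 0) \<and>
         M *\<^sub>v h\<theta> + Hp *\<^sub>v ev v l \<le> Phi (l + 1) - wbar \<and> Hp * Ev v l = M * H\<theta>)"
  proof -
    fix l v :: nat assume l: "l < Np"
    have E: "Hp * Ev v l \<in> carrier_mat ?R np" using Hpc Evc[of v l] by auto
    have e: "Hp *\<^sub>v ev v l \<in> carrier_vec ?R" using Hpc evc[OF l, of v] by auto
    show "(\<forall>\<theta>\<in>\<Theta>. \<forall>r<?R. (Hp *\<^sub>v ev v l) $ r + ((Hp * Ev v l) *\<^sub>v \<theta>) $ r \<le> \<beta> l $ r) \<longleftrightarrow>
      (\<exists>M. M \<in> carrier_mat ?R q\<theta> \<and> (\<forall>r<?R. \<forall>c<q\<theta>. M $$ (r, c) \<ge> 0) \<and>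
         M *\<^sub>v h\<theta> + Hp *\<^sub>v ev v l \<le> Phi (l + 1) - wbar \<and> Hp * Ev v l = M * H\<theta>)"
      using farkas_rows[OF E e \<beta>c[of l] H\<theta>_dim h\<theta>_dim feas] unfolding \<Theta>_def \<beta>_def by auto
  qed
  define C1 where "C1 = (Hx *\<^sub>v (Xj - z 0) \<le> \<alpha> 0 \<cdot>\<^sub>v ones_vec qx)"
  define C3 where "C3 = (\<lambda>l. F *\<^sub>v z l + \<alpha> l \<cdot>\<^sub>v fbar \<le> ones_vec cx \<and>
     Gp *\<^sub>v (K *\<^sub>v z l) + Gp *\<^sub>v V l + \<alpha> l \<cdot>\<^sub>v gbar \<le> ones_vec (cu * p))"
  define P where "P = (\<lambda>v l M. M \<in> carrier_mat ?R q\<theta> \<and> (\<forall>r<?R. \<forall>c<q\<theta>. M $$ (r, c) \<ge> 0) \<and>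
         M *\<^sub>v h\<theta> + Hp *\<^sub>v ev v l \<le> Phi (l + 1) - wbar \<and> Hp * Ev v l = M * H\<theta>)"
  have i: "Xj \<in> Tube 0 \<longleftrightarrow> C1" unfolding Tube_def C1_def using Xj_dim by simp
  have iii: "(\<forall>l<Np. \<forall>X\<in>Tube l. X \<in> XX \<and> Upol l X \<in> Up) \<longleftrightarrow> (\<forall>l<Np. C3 l)"
    unfolding C3_def using partA by blast
  have ii_iv: "((\<forall>l<Np. \<forall>X\<in>Tube l. \<forall>\<theta>\<in>\<Theta>. \<forall>wx\<in>Wx. A \<theta> *\<^sub>v X + B \<theta> *\<^sub>v Upol l X + wx \<in> Tube (l + 1))
      \<and> (\<forall>l<Np. \<forall>X\<in>Tube l. \<forall>\<theta>\<in>\<Theta>. \<forall>wy\<in>Wy. C \<theta> *\<^sub>v X + D \<theta> *\<^sub>v Upol l X + wy \<in> Xpm1))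
      \<longleftrightarrow> (\<forall>l<Np. \<forall>v<length xs. \<exists>M. P v l M)"
  proof -
    have "((\<forall>l<Np. \<forall>X\<in>Tube l. \<forall>\<theta>\<in>\<Theta>. \<forall>wx\<in>Wx. A \<theta> *\<^sub>v X + B \<theta> *\<^sub>v Upol l X + wx \<in> Tube (l + 1))
      \<and> (\<forall>l<Np. \<forall>X\<in>Tube l. \<forall>\<theta>\<in>\<Theta>. \<forall>wy\<in>Wy. C \<theta> *\<^sub>v X + D \<theta> *\<^sub>v Upol l X + wy \<in> Xpm1))
      \<longleftrightarrow> (\<forall>l<Np. (\<forall>X\<in>Tube l. \<forall>\<theta>\<in>\<Theta>. \<forall>wx\<in>Wx. A \<theta> *\<^sub>v X + B \<theta> *\<^sub>v Upol l X + wx \<in> Tube (l + 1))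
      \<and> (\<forall>X\<in>Tube l. \<forall>\<theta>\<in>\<Theta>. \<forall>wy\<in>Wy. C \<theta> *\<^sub>v X + D \<theta> *\<^sub>v Upol l X + wy \<in> Xpm1))" by blast
    also have "\<dots> \<longleftrightarrow> (\<forall>l<Np. \<forall>X\<in>Tube l. \<forall>\<theta>\<in>\<Theta>. \<forall>r<?R. (Hp *\<^sub>v Y l \<theta> X) $ r \<le> \<beta> l $ r)"
      using partB by simp
    also have "\<dots> \<longleftrightarrow> (\<forall>l<Np. \<forall>v<length xs. \<forall>\<theta>\<in>\<Theta>. \<forall>r<?R. (Hp *\<^sub>v ev v l) $ r + ((Hp * Ev v l) *\<^sub>v \<theta>) $ r \<le> \<beta> l $ r)"
      using partC by simp
    also have "\<dots> \<longleftrightarrow> (\<forall>l<Np. \<forall>v<length xs. \<exists>M. P v l M)"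
      unfolding P_def using partD by simp
    finally show ?thesis .
  qed
  have L: "(Xj \<in> Tube 0
          \<and> (\<forall>l<Np. \<forall>X\<in>Tube l. \<forall>\<theta>\<in>\<Theta>. \<forall>wx\<in>Wx.
                A \<theta> *\<^sub>v X + B \<theta> *\<^sub>v Upol l X + wx \<in> Tube (l + 1))
          \<and> (\<forall>l<Np. \<forall>X\<in>Tube l. X \<in> XX \<and> Upol l X \<in> Up)
          \<and> (\<forall>l<Np. \<forall>X\<in>Tube l. \<forall>\<theta>\<in>\<Theta>. \<forall>wy\<in>Wy.
                C \<theta> *\<^sub>v X + D \<theta> *\<^sub>v Upol l X + wy \<in> Xpm1))
     \<longleftrightarrow> C1 \<and> (\<forall>l<Np. C3 l) \<and> (\<forall>l<Np. \<forall>v<length xs. \<exists>M. P v l M)"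
    using i iii ii_iv by blast
  have R: "(\<exists>\<Lambda> :: nat \<Rightarrow> nat \<Rightarrow> real mat.
            (\<forall>v<length xs. \<forall>l<Np.
               \<Lambda> v l \<in> carrier_mat (qx + cx * (p - 1)) q\<theta>
             \<and> (\<forall>r<qx + cx * (p - 1). \<forall>c<q\<theta>. \<Lambda> v l $$ (r, c) \<ge> 0)
             \<and> F *\<^sub>v z l + \<alpha> l \<cdot>\<^sub>v fbar \<le> ones_vec cx
             \<and> Gp *\<^sub>v (K *\<^sub>v z l) + Gp *\<^sub>v V l + \<alpha> l \<cdot>\<^sub>v gbar \<le> ones_vec (cu * p)
             \<and> Hx *\<^sub>v (Xj - z 0) \<le> \<alpha> 0 \<cdot>\<^sub>v ones_vec qx
             \<and> \<Lambda> v l *\<^sub>v h\<theta> + Hp *\<^sub>v ev v l \<le> Phi (l + 1) - wbar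
             \<and> Hp * Ev v l = \<Lambda> v l * H\<theta>))
     \<longleftrightarrow> C1 \<and> (\<forall>l<Np. C3 l) \<and> (\<forall>l<Np. \<forall>v<length xs. \<exists>M. P v l M)"
    (is "(\<exists>\<Lambda>. ?Q \<Lambda>) \<longleftrightarrow> _")
  proof
    assume "\<exists>\<Lambda>. ?Q \<Lambda>"
    then obtain \<Lambda> where Q: "?Q \<Lambda>" by blast
    have v0: "0 < length xs" using xs_ne by auto
    have l0: "0 < Np" using Np_ge by auto
    show "C1 \<and> (\<forall>l<Np. C3 l) \<and> (\<forall>l<Np. \<forall>v<length xs. \<exists>M. P v l M)"
    proof (intro conjI allI impI)
      show C1 using Q v0 l0 unfolding C1_def by blast
    next
      fix l assume "l < Np" thus "C3 l" using Q v0 unfolding C3_def by blast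
    next
      fix l v assume "l < Np" "v < length xs"
      thus "\<exists>M. P v l M" using Q unfolding P_def by blast
    qed
  next
    assume H: "C1 \<and> (\<forall>l<Np. C3 l) \<and> (\<forall>l<Np. \<forall>v<length xs. \<exists>M. P v l M)"
    define \<Lambda> where "\<Lambda> = (\<lambda>v l. SOME M. P v l M)"
    have PL: "\<And>v l. l < Np \<Longrightarrow> v < length xs \<Longrightarrow> P v l (\<Lambda> v l)"
      unfolding \<Lambda>_def using H by (meson someI_ex)
    have "?Q \<Lambda>"
    proof (intro allI impI)
      fix v l assume v: "v < length xs" and l: "l < Np"
      show "\<Lambda> v l \<in> carrier_mat (qx + cx * (p - 1)) q\<theta>
             \<and> (\<forall>r<qx + cx * (p - 1). \<forall>c<q\<theta>. \<Lambda> v l $$ (r, c) \<ge> 0)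
             \<and> F *\<^sub>v z l + \<alpha> l \<cdot>\<^sub>v fbar \<le> ones_vec cx
             \<and> Gp *\<^sub>v (K *\<^sub>v z l) + Gp *\<^sub>v V l + \<alpha> l \<cdot>\<^sub>v gbar \<le> ones_vec (cu * p)
             \<and> Hx *\<^sub>v (Xj - z 0) \<le> \<alpha> 0 \<cdot>\<^sub>v ones_vec qx
             \<and> \<Lambda> v l *\<^sub>v h\<theta> + Hp *\<^sub>v ev v l \<le> Phi (l + 1) - wbar
             \<and> Hp * Ev v l = \<Lambda> v l * H\<theta>"
        using PL[OF l v] H l unfolding P_def C1_def C3_def by blast
    qed
    thus "\<exists>\<Lambda>. ?Q \<Lambda>" by blast
  qed
  show ?thesis by (rule trans[OF L sym[OF R]])
qed



end
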